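(* In the setting described in the context, with $U_1=W=H$ (distributed damping, so the embedding constant is $C=1$), assume conditions (i), (ii), the inequality $\lambda_1\|u\|_H^2\le\|u\|_V^2$ for all $u\in V$, (NL1), (NL2), and $\tau\le T_{2n}$ for all $n\in\mathbb N$. Set $$\tilde c_n=\frac{1}{1+\frac{T_{2n}^3}{30}\cdot\frac{1}{\frac{4}{\lambda_1 m_{2n}}+\frac{3T_{2n}^2}{32m_{2n}}+\frac{M_{2n}T_{2n}^2}{16\lambda_1}}}+M_{2n+1}T_{2n+1}.$$ If $$\sum_{n=0}^\infty\big(2M_{2n+1}T_{2n+1}+\ln\tilde c_n\big)=-\infty,$$ then every solution $u$ of $$u_{tt}(t)+Au(t)+B_1(t)B_1^*(t)u_t(t)+B_2(t)B_2^*(t)u_t(t-\tau)=f(u),\ t>0,\qquad u(0)=u_0\in V,\ u_t(0)=u_1\in H,$$ satisfies $E_S(t)\to0$ as $t\to+\infty$, where $E_S(t)=\frac12(\|u(t)\|_V^2+\|u_t(t)\|_H^2)-\mathcal F(u(t))$.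
   Context: $H$ is a real Hilbert space, $A:\mathcal D(A)\to H$ a densely defined, self-adjoint, positive, coercive linear operator, $V=\mathcal D(A^{1/2})$ with norm $\|v\|_V=\|A^{1/2}v\|_H$, $V\hookrightarrow H\equiv H'\hookrightarrow V'$ densely, and $\lambda_1>0$. $U_1,U_2$ are real Hilbert spaces and $B_i(t)\in\mathcal L(U_i,H)$ with $B_1^*(t)B_2^*(t)=0$ for all $t>0$. There is a sequence $0=t_0<t_1<t_2<\cdots$; $I_n=[t_n,t_{n+1})$, $T_n=t_{n+1}-t_n$. $B_2(t)=0$ on $I_{2n}$, $B_1(t)=0$ on $I_{2n+1}$, $B_1\in C^1([t_{2n},t_{2n+1}];\mathcal L(U_1,H))$, $B_2\in C^1([t_{2n+1},t_{2n+2}];\mathcal L(U_2,H))$. $\tau>0$ is the delay. $W$ is a Hilbert space continuously embedded via $\|u\|_W^2\le C\|u\|_H^2$. $f:V\to H$ is locally Lipschitz (for each $K>0$ there is $L(K)$ with $\|f(u)-f(v)\|_H\le L(K)\|u-v\|_V$ when $\|u\|_V,\|v\|_V\le K$), and $\mathcal F:V\to\mathbb R$ satisfies $\mathcal F(0)=0$, $\mathcal F'(u)v=\langle f(u),v\rangle_{V',V}$. (NL1): $sf(s)\le0$ for all $s\in\mathbb R$; (NL2): $sf(s)-F(s)\le0$ for all $s\in\mathbb R$, with $F(s)=\int_0^sf(r)dr$ (these are stated in scalar form, with $f$ acting pointwise as in the model $f(u)=-|u|^pu$, $\mathcal F(u)=\int_\Omega F(u)dx$). (i): there are $0<m_{2n}\le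 M_{2n}$ with $m_{2n}\|u\|_W^2\le\|B_1^*(t)u\|_{U_1}^2\le M_{2n}\|u\|_W^2$ for $u\in H$, $t\in I_{2n}$. (ii): there is $M_{2n+1}>0$ with $\|B_2^*(t)u\|_{U_2}^2\le M_{2n+1}\|u\|_W^2$ for $u\in H$, $t\in I_{2n+1}$. A solution on $[0,T]$ is $u\in L^2(0,T;V)\cap H^1(0,T;H)\cap H^2(0,T;V')$ with $\|B_1^*u_t\|_{U_1},\|B_2^*u_t(\cdot-\tau)\|_{U_2}\in L^2(0,T)$, $Au\in L^2(0,T;V')$, $f(u)\in L^2(0,T;H)$, the initial conditions, and the equation holding in $L^2(0,T;V')$; solutions are understood to exist for all $T>0$. *)

theory Defs
  imports "HOL-Analysis.Analysis"
begin

text \<open>Unbounded operators on a real Hilbert space H are given by a domain D and a map T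
  (only its values on D matter).\<close>

definition lin_op_on :: "'h::real_inner set \<Rightarrow> ('h \<Rightarrow> 'h) \<Rightarrow> bool" where
  "lin_op_on D T \<longleftrightarrow> subspace D \<and>
     (\<forall>x\<in>D. \<forall>y\<in>D. T (x + y) = T x + T y) \<and> (\<forall>c. \<forall>x\<in>D. T (c *\<^sub>R x) = c *\<^sub>R T x)"

text \<open>Densely defined self-adjoint operator: D(T*) = D(T) and T* = T on it.\<close>
definition self_adjoint_op :: "'h::real_inner set \<Rightarrow> ('h \<Rightarrow> 'h) \<Rightarrow> bool" where
  "self_adjoint_op D T \<longleftrightarrow> lin_op_on D T \<and> closure D = UNIV \<and>
     {y. \<exists>z. \<forall>x\<in>D. inner (T x) y = inner x z} = D \<and>
     (\<forall>x\<in>D. \<forall>y\<in>D. inner (T x) y = inner x (T y))"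

definition positive_op :: "'h::real_inner set \<Rightarrow> ('h \<Rightarrow> 'h) \<Rightarrow> bool" where
  "positive_op D T \<longleftrightarrow> (\<forall>x\<in>D. 0 \<le> inner (T x) x)"

definition coercive_op :: "'h::real_inner set \<Rightarrow> ('h \<Rightarrow> 'h) \<Rightarrow> bool" where
  "coercive_op D T \<longleftrightarrow> (\<exists>c>0. \<forall>x\<in>D. c * (norm x)\<^sup>2 \<le> inner (T x) x)"

text \<open>(V,S) is the (unique) positive self-adjoint square root A^(1/2) of (DA,A):
  V = D(A^(1/2)), S = A^(1/2).\<close>
definition is_sqrt_op :: "'h::real_inner set \<Rightarrow> ('h \<Rightarrow> 'h) \<Rightarrow> 'h set \<Rightarrow> ('h \<Rightarrow> 'h) \<Rightarrow> bool" where
  "is_sqrt_op DA A V S \<longleftrightarrow> self_adjoint_op V S \<and> positive_op V S \<and>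
     DA = {x\<in>V. S x \<in> V} \<and> (\<forall>x\<in>DA. A x = S (S x))"

text \<open>Global solution of
   u'' + A u + B1 B1* u' + B2 B2* u'(t-\<tau>) = f(u),  u(0)=u0, u'(0)=u1,
  with U1 = H. The equation in V' is stated in integrated weak form, tested with every
  phi in V; here <A u, phi>_{V',V} = <S u, S phi>. The representatives are the continuous
  ones: u in C([0,oo);V), u' in C([0,oo);H), u' the H-valued derivative of u.\<close>
definition delayed_wave_solution ::
  "'h::real_inner set \<Rightarrow> ('h \<Rightarrow> 'h) \<Rightarrow> (real \<Rightarrow> 'h \<Rightarrow>\<^sub>L 'h) \<Rightarrow> (real \<Rightarrow> 'h \<Rightarrow>\<^sub>L 'h)
   \<Rightarrow> (real \<Rightarrow> 'u::real_inner \<Rightarrow>\<^sub>L 'h) \<Rightarrow> (real \<Rightarrow> 'h \<Rightarrow>\<^sub>L 'u) \<Rightarrow> real \<Rightarrow> ('h \<Rightarrow> 'h)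
   \<Rightarrow> 'h \<Rightarrow> 'h \<Rightarrow> (real \<Rightarrow> 'h) \<Rightarrow> (real \<Rightarrow> 'h) \<Rightarrow> bool"
  where
  "delayed_wave_solution V S B1 B1s B2 B2s \<tau> f u0 u1 u u' \<longleftrightarrow>
     (\<forall>t\<ge>0. u t \<in> V) \<and>
     continuous_on {0..} u \<and> continuous_on {0..} (\<lambda>t. S (u t)) \<and>
     (\<forall>t\<ge>0. (u has_vector_derivative u' t) (at t within {0..})) \<and>
     continuous_on {0..} u' \<and>
     u 0 = u0 \<and> u' 0 = u1 \<and>
     (\<forall>\<phi>\<in>V. \<forall>t\<ge>0.
        ((\<lambda>s. inner (f (u s)) \<phi> - inner (S (u s)) (S \<phi>)
              - inner (blinfun_apply (B1 s) (blinfun_apply (B1s s) (u' s))) \<phi>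
              - inner (blinfun_apply (B2 s) (blinfun_apply (B2s s) (u' (s - \<tau>)))) \<phi>)
          has_integral (inner (u' t) \<phi> - inner u1 \<phi>)) {0..t})"

definition energy_S :: "('h::real_inner \<Rightarrow> 'h) \<Rightarrow> ('h \<Rightarrow> real) \<Rightarrow> (real \<Rightarrow> 'h) \<Rightarrow> (real \<Rightarrow> 'h) \<Rightarrow> real \<Rightarrow> real" where
  "energy_S S F u u' t = (1/2) * ((norm (S (u t)))\<^sup>2 + (norm (u' t))\<^sup>2) - F (u t)"

end

theory Submission
  imports Defs
begin


lemma unif_dq:
  fixes u v :: "real \<Rightarrow> 'a::real_normed_vector"
  assumes du: "\<And>s. s \<in> {a..b} \<Longrightarrow> (u has_vector_derivative v s) (at s within {a..b})"
    and cv: "continuous_on {a..b} v" and e: "e > 0"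
  shows "\<exists>d>0. \<forall>s h. s \<in> {a..b} \<longrightarrow> 0 < h \<longrightarrow> h < d \<longrightarrow> s + h \<le> b \<longrightarrow>
            norm ((u (s+h) - u s) /\<^sub>R h - v s) \<le> e"
proof -
  have "uniformly_continuous_on {a..b} v" using compact_uniformly_continuous[OF cv compact_Icc] .
  then obtain d where d: "d>0" "\<And>x x'. x\<in>{a..b} \<Longrightarrow> x'\<in>{a..b} \<Longrightarrow> dist x' x < d \<Longrightarrow> dist (v x') (v x) < e"
    unfolding uniformly_continuous_on_def using e by metis
  show ?thesis
  proof (intro exI[of _ d] conjI allI impI)
    show "d > 0" by (rule d(1))
    fix s h assume s: "s \<in> {a..b}" and h: "0 < h" "h < d" "s + h \<le> b"
    have sub: "{s..s+h} \<subseteq> {a..b}" using s h by auto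
    have "norm (u (s+h) - u s - ((s+h) - s) *\<^sub>R v s) \<le> norm ((s+h) - s) * e"
    proof (rule vector_differentiable_bound_linearization[where S="{s..s+h}" and f'=v])
      show "(u has_vector_derivative v x) (at x within {s..s+h})" if "x \<in> {s..s+h}" for x
        using du[of x] sub that has_vector_derivative_within_subset by blast
      show "closed_segment s (s+h) \<subseteq> {s..s+h}" using h by (simp add: closed_segment_eq_real_ivl)
      show "norm (v x - v s) \<le> e" if "x \<in> {s..s+h}" for x
      proof -
        have "dist x s < d" using that h by (auto simp: dist_real_def)
        then have "dist (v x) (v s) < e" using d(2)[of s x] that sub s by auto
        then show ?thesis by (simp add: dist_norm)
      qed
      show "s \<in> {s..s+h}" using h by simp
    qed
    then have *: "norm (u (s+h) - u s - h *\<^sub>R v s) \<le> h * e" using h by simp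
    have "(u (s+h) - u s) /\<^sub>R h - v s = (1/h) *\<^sub>R (u (s+h) - u s - h *\<^sub>R v s)"
      using h by (simp add: algebra_simps inverse_eq_divide)
    then have "norm ((u (s+h) - u s) /\<^sub>R h - v s) = (1/h) * norm (u (s+h) - u s - h *\<^sub>R v s)"
      using h by simp
    also have "\<dots> \<le> (1/h) * (h * e)" using * h by (intro mult_left_mono) auto
    also have "\<dots> = e" using h by simp
    finally show "norm ((u (s+h) - u s) /\<^sub>R h - v s) \<le> e" .
  qed
qed

lemma avg_bound:
  fixes f :: "real \<Rightarrow> real"
  assumes cf: "continuous_on {a..b} f" and e: "e > 0"
  shows "\<exists>d>0. \<forall>x h. x \<in> {a..b} \<longrightarrow> 0 < h \<longrightarrow> h < d \<longrightarrow> x + h \<le> b \<longrightarrow>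
            \<bar>(1/h) * integral {x..x+h} f - f x\<bar> \<le> e"
proof -
  have "uniformly_continuous_on {a..b} f" using compact_uniformly_continuous[OF cf compact_Icc] .
  then obtain d where d: "d>0" "\<And>x x'. x\<in>{a..b} \<Longrightarrow> x'\<in>{a..b} \<Longrightarrow> dist x' x < d \<Longrightarrow> dist (f x') (f x) < e"
    unfolding uniformly_continuous_on_def using e by metis
  show ?thesis
  proof (intro exI[of _ d] conjI allI impI)
    show "d > 0" by (rule d(1))
    fix x h assume x: "x \<in> {a..b}" and h: "0 < h" "h < d" "x + h \<le> b"
    have sub: "{x..x+h} \<subseteq> {a..b}" using x h by auto
    have cf': "continuous_on {x..x+h} f" using continuous_on_subset[OF cf sub] .
    have i1: "(f has_integral integral {x..x+h} f) {x..x+h}"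
      using integrable_continuous_real[OF cf'] by (simp add: has_integral_integral)
    have i2: "((\<lambda>s. f x) has_integral (h * f x)) {x..x+h}"
      using has_integral_const_real[of "f x" x "x+h"] h by simp
    have i3: "((\<lambda>s. f s - f x) has_integral (integral {x..x+h} f - h * f x)) {x..x+h}"
      using has_integral_diff[OF i1 i2] .
    have bnd: "norm (f s - f x) \<le> e" if "s \<in> cbox x (x+h)" for s
    proof -
      from that have s: "s \<in> {x..x+h}" by simp
      have "dist s x < d" using s h by (auto simp: dist_real_def)
      then have "dist (f s) (f x) < e" using d(2)[of x s] s sub x by auto
      then show "norm (f s - f x) \<le> e" by (simp add: dist_norm)
    qed
    have "norm (integral {x..x+h} f - h * f x) \<le> e * h"
      using has_integral_bound[of e "\<lambda>s. f s - f x" _ x "x+h", OF _ _ bnd] i3 e h by simp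
    then have "\<bar>integral {x..x+h} f - h * f x\<bar> \<le> e * h" using h by simp
    then have A: "(1/h) * \<bar>integral {x..x+h} f - h * f x\<bar> \<le> (1/h) * (e * h)"
      using h by (intro mult_left_mono) auto
    have B: "(1/h) * integral {x..x+h} f - f x = (1/h) * (integral {x..x+h} f - h * f x)"
      using h by (simp add: field_simps)
    have C: "\<bar>(1/h) * integral {x..x+h} f - f x\<bar> = (1/h) * \<bar>integral {x..x+h} f - h * f x\<bar>"
      unfolding B using h by (simp add: abs_mult)
    have D: "(1/h) * (e * h) = e" using h by simp
    show "\<bar>(1/h) * integral {x..x+h} f - f x\<bar> \<le> e" using A C D by linarith
  qed
qed




lemma zero_deriv_prod:
  fixes v w :: "real \<Rightarrow> 'h::real_inner"
  assumes dw: "(w has_vector_derivative w') (at t within X)"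
    and cv: "continuous (at t within X) v"
  shows "((\<lambda>s. inner (v s - v t) (w s - w t)) has_vector_derivative 0) (at t within X)"
proof -
  have bl: "bounded_linear (\<lambda>x::real. x *\<^sub>R w')" by (rule bounded_linear_scaleR_left)
  from dw have "bounded_linear (\<lambda>x::real. x *\<^sub>R w') \<and> ((\<lambda>y. (1 / norm (y - t)) *\<^sub>R (w y - (w t + (y - t) *\<^sub>R w'))) \<longlongrightarrow> 0) (at t within X)"
    by (simp only: has_vector_derivative_def has_derivative_within)
  then have "((\<lambda>y. (1 / norm (y - t)) *\<^sub>R (w y - (w t + (y - t) *\<^sub>R w'))) \<longlongrightarrow> 0) (at t within X)"
    by (rule conjunct2)
  define R where "R = (\<lambda>y. (1 / norm (y - t)) *\<^sub>R (w y - (w t + (y - t) *\<^sub>R w')))"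
  have R0: "(R \<longlongrightarrow> 0) (at t within X)" using \<open>(_ \<longlongrightarrow> 0) _\<close> unfolding R_def .
  have v0: "((\<lambda>y. v y - v t) \<longlongrightarrow> 0) (at t within X)"
    using cv unfolding continuous_within by (simp add: LIM_zero)
  have g0: "((\<lambda>y. norm (v y - v t) * (norm (R y) + norm w')) \<longlongrightarrow> 0) (at t within X)"
  proof -
    have "((\<lambda>y. norm (v y - v t) * (norm (R y) + norm w')) \<longlongrightarrow> norm (0::'h) * (norm (0::'h) + norm w')) (at t within X)"
      by (intro tendsto_intros v0 R0)
    then show ?thesis by simp
  qed
  have bound: "norm ((1 / norm (y - t)) *\<^sub>R (inner (v y - v t) (w y - w t) - (inner (v t - v t) (w t - w t) + (y - t) *\<^sub>R 0)))
        \<le> norm (v y - v t) * (norm (R y) + norm w')" for y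
  proof (cases "y = t")
    case True then show ?thesis by simp
  next
    case False
    then have ny: "norm (y - t) > 0" by simp
    have "w y - w t = norm (y - t) *\<^sub>R R y + (y - t) *\<^sub>R w'"
      using ny unfolding R_def by (simp add: algebra_simps)
    then have "norm (w y - w t) \<le> norm (y - t) * norm (R y) + norm (y - t) * norm w'"
    proof -
      have "norm (w y - w t) \<le> norm (norm (y - t) *\<^sub>R R y) + norm ((y - t) *\<^sub>R w')"
        unfolding \<open>w y - w t = _\<close> by (rule norm_triangle_ineq)
      then show ?thesis by simp
    qed
    then have nw: "norm (w y - w t) \<le> norm (y - t) * (norm (R y) + norm w')"
      by (simp add: algebra_simps)
    have "norm ((1 / norm (y - t)) *\<^sub>R (inner (v y - v t) (w y - w t) - (inner (v t - v t) (w t - w t) + (y - t) *\<^sub>R 0)))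
        = \<bar>inner (v y - v t) (w y - w t)\<bar> / norm (y - t)" by simp
    also have "\<dots> \<le> (norm (v y - v t) * norm (w y - w t)) / norm (y - t)"
      using ny by (intro divide_right_mono Cauchy_Schwarz_ineq2) auto
    also have "\<dots> \<le> (norm (v y - v t) * (norm (y - t) * (norm (R y) + norm w'))) / norm (y - t)"
      using ny nw by (intro divide_right_mono mult_left_mono) auto
    also have "\<dots> = norm (v y - v t) * (norm (R y) + norm w')" using ny by simp
    finally show ?thesis .
  qed
  have "((\<lambda>y. (1 / norm (y - t)) *\<^sub>R (inner (v y - v t) (w y - w t) - (inner (v t - v t) (w t - w t) + (y - t) *\<^sub>R 0))) \<longlongrightarrow> 0) (at t within X)"
    by (rule Lim_null_comparison[OF always_eventually g0]) (rule allI, rule bound)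
  then have "bounded_linear (\<lambda>x::real. x *\<^sub>R (0::real)) \<and> ((\<lambda>y. (1 / norm (y - t)) *\<^sub>R (inner (v y - v t) (w y - w t) - (inner (v t - v t) (w t - w t) + (y - t) *\<^sub>R 0))) \<longlongrightarrow> 0) (at t within X)"
    using bounded_linear_scaleR_left by blast
  then show ?thesis
    by (simp only: has_vector_derivative_def has_derivative_within)
qed

locale wsol =
  fixes V :: "'h::{real_inner,complete_space} set" and S :: "'h \<Rightarrow> 'h"
    and a b :: real and u v \<kappa> :: "real \<Rightarrow> 'h"
  assumes ab: "a \<le> b"
  and uV: "\<And>s. s\<in>{a..b} \<Longrightarrow> u s \<in> V"
  and cu: "continuous_on {a..b} u" and cSu: "continuous_on {a..b} (\<lambda>s. S (u s))"
  and cv: "continuous_on {a..b} v" and ck: "continuous_on {a..b} \<kappa>"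
  and du: "\<And>s. s\<in>{a..b} \<Longrightarrow> (u has_vector_derivative v s) (at s within {a..b})"
  and weak: "\<And>\<phi> x. \<phi>\<in>V \<Longrightarrow> x\<in>{a..b} \<Longrightarrow>
      ((\<lambda>s. inner (\<kappa> s) \<phi> - inner (S (u s)) (S \<phi>)) has_integral (inner (v x) \<phi> - inner (v a) \<phi>)) {a..x}"
begin

lemma weak_sub:
  assumes phi: "\<phi>\<in>V" and le: "a \<le> a'" "a' \<le> x" "x \<le> b"
  shows "((\<lambda>s. inner (\<kappa> s) \<phi> - inner (S (u s)) (S \<phi>)) has_integral (inner (v x) \<phi> - inner (v a') \<phi>)) {a'..x}"
proof -
  let ?g = "\<lambda>s. inner (\<kappa> s) \<phi> - inner (S (u s)) (S \<phi>)"
  have I1: "(?g has_integral (inner (v x) \<phi> - inner (v a) \<phi>)) {a..x}" using weak[OF phi] le by auto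
  have I2: "(?g has_integral (inner (v a') \<phi> - inner (v a) \<phi>)) {a..a'}" using weak[OF phi] le by auto
  have int: "?g integrable_on {a..x}" using I1 by blast
  have "integral {a..a'} ?g + integral {a'..x} ?g = integral {a..x} ?g"
    using Henstock_Kurzweil_Integration.integral_combine[OF le(1,2) int] .
  then have "integral {a'..x} ?g = inner (v x) \<phi> - inner (v a') \<phi>"
    using integral_unique[OF I1] integral_unique[OF I2] by simp
  moreover have "?g integrable_on {a'..x}" using integrable_subinterval_real[OF int] le by auto
  ultimately show ?thesis by (metis has_integral_integral)
qed

lemma sub:
  assumes "a \<le> a'" "a' \<le> b'" "b' \<le> b"
  shows "wsol V S a' b' u v \<kappa>"
proof -
  have sub: "{a'..b'} \<subseteq> {a..b}" using assms by auto
  show ?thesis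
  proof
    show "a' \<le> b'" by fact
    show "\<And>s. s \<in> {a'..b'} \<Longrightarrow> u s \<in> V" using uV sub by auto
    show "continuous_on {a'..b'} u" using continuous_on_subset[OF cu sub] .
    show "continuous_on {a'..b'} (\<lambda>s. S (u s))" using continuous_on_subset[OF cSu sub] .
    show "continuous_on {a'..b'} v" using continuous_on_subset[OF cv sub] .
    show "continuous_on {a'..b'} \<kappa>" using continuous_on_subset[OF ck sub] .
    show "(u has_vector_derivative v s) (at s within {a'..b'})" if "s \<in> {a'..b'}" for s
      using du[of s] that sub has_vector_derivative_within_subset by blast
    show "((\<lambda>s. inner (\<kappa> s) \<phi> - inner (S (u s)) (S \<phi>)) has_integral (inner (v x) \<phi> - inner (v a') \<phi>)) {a'..x}"
      if "\<phi> \<in> V" "x \<in> {a'..b'}" for \<phi> x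
      using weak_sub[OF that(1)] that(2) assms by auto
  qed
qed

lemma gcont: "\<phi> \<in> V \<Longrightarrow> continuous_on {a..b} (\<lambda>s. inner (\<kappa> s) \<phi> - inner (S (u s)) (S \<phi>))"
  by (intro continuous_intros ck cSu)

lemma dphi:
  assumes phi: "\<phi>\<in>V" and x: "x\<in>{a..b}"
  shows "((\<lambda>s. inner (v s) \<phi>) has_vector_derivative (inner (\<kappa> x) \<phi> - inner (S (u x)) (S \<phi>))) (at x within {a..b})"
proof -
  let ?g = "\<lambda>s. inner (\<kappa> s) \<phi> - inner (S (u s)) (S \<phi>)"
  have D: "((\<lambda>y. integral {a..y} ?g) has_vector_derivative ?g x) (at x within {a..b})"
    using integral_has_vector_derivative[OF gcont[OF phi] x] .
  have D2: "((\<lambda>y. inner (v a) \<phi> + integral {a..y} ?g) has_vector_derivative (0 + ?g x)) (at x within {a..b})"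
    by (intro has_vector_derivative_add has_vector_derivative_const D)
  show ?thesis
  proof (rule has_vector_derivative_transform[OF x _ D2[simplified]])
    fix y assume y: "y \<in> {a..b}"
    have "integral {a..y} ?g = inner (v y) \<phi> - inner (v a) \<phi>"
      using integral_unique[OF weak[OF phi y]] .
    then show "inner (v y) \<phi> = inner (v a) \<phi> + integral {a..y} ?g" by simp
  qed
qed

lemma PLd:
  assumes wV: "\<And>s. s\<in>{a..b} \<Longrightarrow> w s \<in> V"
    and dw: "(w has_vector_derivative w') (at t within {a..b})" and t: "t\<in>{a..b}"
  shows "((\<lambda>s. inner (v s) (w s)) has_vector_derivative
           (inner (\<kappa> t) (w t) - inner (S (u t)) (S (w t)) + inner (v t) w')) (at t within {a..b})"
proof -
  have D1: "((\<lambda>s. inner (v s) (w t)) has_vector_derivative (inner (\<kappa> t) (w t) - inner (S (u t)) (S (w t)))) (at t within {a..b})"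
    using dphi[OF wV[OF t] t] .
  have D2: "((\<lambda>s. inner (v t) (w s)) has_vector_derivative inner (v t) w') (at t within {a..b})"
    using bounded_linear.has_vector_derivative[OF bounded_linear_inner_right dw] .
  have cvt: "continuous (at t within {a..b}) v" using cv t continuous_on_eq_continuous_within by blast
  have D3: "((\<lambda>s. inner (v s - v t) (w s - w t)) has_vector_derivative 0) (at t within {a..b})"
    using zero_deriv_prod[OF dw cvt] .
  have D: "((\<lambda>s. inner (v s) (w t) + inner (v t) (w s) - inner (v t) (w t) + inner (v s - v t) (w s - w t)) has_vector_derivative
      ((inner (\<kappa> t) (w t) - inner (S (u t)) (S (w t))) + inner (v t) w' - 0 + 0)) (at t within {a..b})"
    by (intro has_vector_derivative_add has_vector_derivative_diff D1 D2 D3 has_vector_derivative_const)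
  have eq: "inner (v s) (w t) + inner (v t) (w s) - inner (v t) (w t) + inner (v s - v t) (w s - w t) = inner (v s) (w s)" for s
    by (simp add: inner_diff_left inner_diff_right inner_commute)
  show ?thesis using D unfolding eq by simp
qed

lemma PL:
  assumes wV: "\<And>s. s\<in>{a..b} \<Longrightarrow> w s \<in> V"
    and dw: "\<And>s. s\<in>{a..b} \<Longrightarrow> (w has_vector_derivative w' s) (at s within {a..b})"
  shows "((\<lambda>s. inner (\<kappa> s) (w s) - inner (S (u s)) (S (w s)) + inner (v s) (w' s)) has_integral
           (inner (v b) (w b) - inner (v a) (w a))) {a..b}"
  using fundamental_theorem_of_calculus[OF ab, of "\<lambda>s. inner (v s) (w s)"] PLd[OF wV dw] by auto

end




lemma cont_hasint:
  fixes f :: "real \<Rightarrow> real"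
  assumes "continuous_on {a..b} f" "a \<le> x" "x \<le> y" "y \<le> b"
  shows "(f has_integral integral {x..y} f) {x..y}"
proof -
  have "continuous_on {x..y} f" using continuous_on_subset[OF assms(1)] assms by auto
  then show ?thesis using integrable_continuous_real has_integral_integral by blast
qed

lemma cshift:
  fixes f :: "real \<Rightarrow> 'a::topological_space" and c :: real
  assumes "continuous_on {a..b} f" "\<And>s. s\<in>{x..y} \<Longrightarrow> s + c \<in> {a..b}"
  shows "continuous_on {x..y} (\<lambda>s. f (s + c))"
proof -
  have "continuous_on {x..y} (\<lambda>s. s + c)" by (intro continuous_on_add continuous_on_id continuous_on_const)
  moreover have "(\<lambda>s. s + c) ` {x..y} \<subseteq> {a..b}" using assms(2) by auto
  ultimately show ?thesis using continuous_on_compose2[OF assms(1)] by blast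
qed

lemma to_tendsto:
  fixes F :: "real \<Rightarrow> 'a::real_normed_vector"
  assumes "\<And>e. e > 0 \<Longrightarrow> \<exists>d>0. \<forall>h. 0 < h \<longrightarrow> h < d \<longrightarrow> norm (F h - c) \<le> e"
  shows "(F \<longlongrightarrow> c) (at_right 0)"
  unfolding tendsto_iff
proof (intro allI impI)
  fix e :: real assume e: "e > 0"
  obtain d where d: "d > 0" "\<forall>h. 0 < h \<longrightarrow> h < d \<longrightarrow> norm (F h - c) \<le> e/2"
    using assms[of "e/2"] e by auto
  show "\<forall>\<^sub>F x in at_right 0. dist (F x) c < e"
    unfolding eventually_at_right_field
    using d e by (intro exI[of _ d]) (auto simp: dist_norm intro: le_less_trans[of _ "e/2"])
qed

lemma bounded_on:
  fixes f :: "real \<Rightarrow> 'a::real_normed_vector"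
  assumes "continuous_on {a..b} f"
  shows "\<exists>B\<ge>0. \<forall>s\<in>{a..b}. norm (f s) \<le> B"
proof -
  have "bounded (f ` {a..b})" using compact_imp_bounded[OF compact_continuous_image[OF assms compact_Icc]] .
  then obtain B where "\<forall>x\<in>f ` {a..b}. norm x \<le> B" unfolding bounded_iff by blast
  then show ?thesis by (intro exI[of _ "max B 0"]) auto
qed

context wsol begin

lemma shift_deriv:
  assumes s: "s \<in> {x..y}" and sub: "\<And>r. r\<in>{x..y} \<Longrightarrow> r + c \<in> {a..b}"
  shows "((\<lambda>r. u (r + c)) has_vector_derivative v (s + c)) (at s within {x..y})"
proof -
  have "((\<lambda>r. r + c) has_real_derivative 1) (at s within {x..y})"
    by (auto intro!: derivative_eq_intros)
  then have 1: "((\<lambda>r. r + c) has_vector_derivative 1) (at s within {x..y})"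
    using has_real_derivative_iff_has_vector_derivative by blast
  have im: "(\<lambda>r. r + c) ` {x..y} \<subseteq> {a..b}" using sub by auto
  have 2: "(u has_vector_derivative v (s + c)) (at (s + c) within (\<lambda>r. r + c) ` {x..y})"
    using has_vector_derivative_within_subset[OF du[OF sub[OF s]] im] .
  from vector_diff_chain_within[OF 1 2] show ?thesis by (simp add: o_def)
qed

lemma EL_lt:
  assumes t: "a \<le> t" "t < b"
  shows "inner (v t) (v t) + inner (S (u t)) (S (u t)) - inner (v a) (v a) - inner (S (u a)) (S (u a))
         = 2 * integral {a..t} (\<lambda>s. inner (\<kappa> s) (v s))"
proof -
  define g where "g = (\<lambda>\<phi> s. inner (\<kappa> s) \<phi> - inner (S (u s)) (S \<phi>))"
  define q where "q = (\<lambda>s. inner (\<kappa> s) (u s))"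
  define D where "D = (\<lambda>h s. (u (s+h) - u s) /\<^sub>R h)"
  define LH where "LH = (\<lambda>h. inner (v t) (D h t) - (1/h) * integral {t..t+h} (g (u t))
                          - inner (v a) (D h a) + (1/h) * integral {a..a+h} (g (u a)))"
  define RH where "RH = (\<lambda>h. integral {a..t} (\<lambda>s. inner (\<kappa> s + \<kappa> (s+h)) (D h s))
                          + (1/h) * integral {a..a+h} q - (1/h) * integral {t..t+h} q)"
  define I where "I = integral {a..t} (\<lambda>s. inner (\<kappa> s) (v s))"
  have cq: "continuous_on {a..b} q" unfolding q_def by (intro continuous_intros ck cu)
  have cg: "\<And>\<phi>. \<phi>\<in>V \<Longrightarrow> continuous_on {a..b} (g \<phi>)" unfolding g_def using gcont by blast
  have eq: "LH h = RH h" if h: "0 < h" "h < b - t" for h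
  proof -
    interpret A: wsol V S a t u v \<kappa> using sub[of a t] t by auto
    have P1a: "((\<lambda>s. inner (\<kappa> s) (u (s+h)) - inner (S (u s)) (S (u (s+h))) + inner (v s) (v (s+h)))
        has_integral (inner (v t) (u (t+h)) - inner (v a) (u (a+h)))) {a..t}"
    proof (rule A.PL)
      show "u (s + h) \<in> V" if "s \<in> {a..t}" for s using uV that h t by auto
      show "((\<lambda>r. u (r + h)) has_vector_derivative v (s + h)) (at s within {a..t})" if "s \<in> {a..t}" for s
        using shift_deriv[OF that] h t by auto
    qed
    interpret B: wsol V S "a+h" "t+h" u v \<kappa> using sub[of "a+h" "t+h"] t h by auto
    have P1b: "((\<lambda>s. inner (\<kappa> s) (u (s + -h)) - inner (S (u s)) (S (u (s + -h))) + inner (v s) (v (s + -h)))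
        has_integral (inner (v (t+h)) (u (t+h + -h)) - inner (v (a+h)) (u (a+h + -h)))) {a+h..t+h}"
    proof (rule B.PL)
      show "u (s + -h) \<in> V" if "s \<in> {a+h..t+h}" for s using uV that h t by auto
      show "((\<lambda>r. u (r + -h)) has_vector_derivative v (s + -h)) (at s within {a+h..t+h})" if "s \<in> {a+h..t+h}" for s
        by (rule shift_deriv[OF that]) (use h t in auto)
    qed
    have P1c: "((\<lambda>s. inner (\<kappa> (s+h)) (u s) - inner (S (u (s+h))) (S (u s)) + inner (v (s+h)) (v s))
        has_integral (inner (v (t+h)) (u t) - inner (v (a+h)) (u a))) {a..t}"
      using has_integral_shift_real_ivl[OF P1b, of h] by simp
    have P1d: "((\<lambda>s. (inner (\<kappa> s) (u (s+h)) - inner (S (u s)) (S (u (s+h))) + inner (v s) (v (s+h)))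
           - (inner (\<kappa> (s+h)) (u s) - inner (S (u (s+h))) (S (u s)) + inner (v (s+h)) (v s)))
        has_integral (inner (v t) (u (t+h)) - inner (v a) (u (a+h)) - (inner (v (t+h)) (u t) - inner (v (a+h)) (u a)))) {a..t}"
      using has_integral_diff[OF P1a P1c] .
    have ie: "(inner (\<kappa> s) (u (s+h)) - inner (S (u s)) (S (u (s+h))) + inner (v s) (v (s+h)))
           - (inner (\<kappa> (s+h)) (u s) - inner (S (u (s+h))) (S (u s)) + inner (v (s+h)) (v s))
         = inner (\<kappa> s + \<kappa> (s+h)) (u (s+h) - u s) + q s - q (s+h)" for s
      unfolding q_def
      by (simp add: inner_commute[of "S (u (s+h))"] inner_commute[of "v (s+h)"] inner_add_left inner_diff_right)
    define Pv where "Pv = inner (v t) (u (t+h)) - inner (v a) (u (a+h)) - (inner (v (t+h)) (u t) - inner (v (a+h)) (u a))"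
    have P1: "((\<lambda>s. inner (\<kappa> s + \<kappa> (s+h)) (u (s+h) - u s) + q s - q (s+h)) has_integral Pv) {a..t}"
      using P1d unfolding ie Pv_def .
    have ck2: "continuous_on {a..t} (\<lambda>s. inner (\<kappa> s + \<kappa> (s+h)) (u (s+h) - u s))"
    proof -
      have "continuous_on {a..t} (\<lambda>s. \<kappa> (s+h))" using cshift[OF ck, of a t h] h t by auto
      moreover have "continuous_on {a..t} (\<lambda>s. u (s+h))" using cshift[OF cu, of a t h] h t by auto
      moreover have "continuous_on {a..t} \<kappa>" "continuous_on {a..t} u"
        using continuous_on_subset[OF ck] continuous_on_subset[OF cu] t by auto
      ultimately show ?thesis by (intro continuous_intros)
    qed
    define Ik where "Ik = integral {a..t} (\<lambda>s. inner (\<kappa> s + \<kappa> (s+h)) (u (s+h) - u s))"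
    have HIk: "((\<lambda>s. inner (\<kappa> s + \<kappa> (s+h)) (u (s+h) - u s)) has_integral Ik) {a..t}"
      unfolding Ik_def using integrable_continuous_real[OF ck2] has_integral_integral by blast
    have Hq: "(q has_integral integral {a..t} q) {a..t}" using cont_hasint[OF cq] t by auto
    have Hqs0: "(q has_integral integral {a+h..t+h} q) {a+h..t+h}" using cont_hasint[OF cq] t h by auto
    have Hqs: "((\<lambda>s. q (s+h)) has_integral integral {a+h..t+h} q) {a..t}"
      using has_integral_shift_real_ivl[OF Hqs0, of h] by simp
    have P2: "((\<lambda>s. inner (\<kappa> s + \<kappa> (s+h)) (u (s+h) - u s) + q s - q (s+h)) has_integral
              (Ik + integral {a..t} q - integral {a+h..t+h} q)) {a..t}"
      using has_integral_diff[OF has_integral_add[OF HIk Hq] Hqs] by simp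
    have Pv_eq: "Pv = Ik + integral {a..t} q - integral {a+h..t+h} q"
      using has_integral_unique[OF P1 P2] .
    have C1: "(q has_integral (integral {a..t} q + integral {t..t+h} q)) {a..t+h}"
      using has_integral_combine[OF _ _ Hq cont_hasint[OF cq, of t "t+h"]] t h by auto
    have C2: "(q has_integral (integral {a..a+h} q + integral {a+h..t+h} q)) {a..t+h}"
      using has_integral_combine[OF _ _ cont_hasint[OF cq, of a "a+h"] Hqs0] t h by auto
    have Cq: "integral {a..t} q + integral {t..t+h} q = integral {a..a+h} q + integral {a+h..t+h} q"
      using has_integral_unique[OF C1 C2] .
    have Pv2: "Pv = Ik + integral {a..a+h} q - integral {t..t+h} q" using Pv_eq Cq by simp
    have HD: "((\<lambda>s. inner (\<kappa> s + \<kappa> (s+h)) (D h s)) has_integral ((1/h) * Ik)) {a..t}"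
    proof -
      have "((\<lambda>s. (1/h) * inner (\<kappa> s + \<kappa> (s+h)) (u (s+h) - u s)) has_integral ((1/h) * Ik)) {a..t}"
        using has_integral_mult_right[OF HIk] .
      moreover have "(1/h) * inner (\<kappa> s + \<kappa> (s+h)) (u (s+h) - u s) = inner (\<kappa> s + \<kappa> (s+h)) (D h s)" for s
        unfolding D_def by (simp add: inverse_eq_divide)
      ultimately show ?thesis by simp
    qed
    have RHv: "RH h = (1/h) * Pv"
      unfolding RH_def Pv2 integral_unique[OF HD] by (simp add: algebra_simps)
    have G1: "integral {t..t+h} (g (u t)) = inner (v (t+h)) (u t) - inner (v t) (u t)"
      using integral_unique[OF weak_sub[OF uV[of t]]] t h unfolding g_def by auto
    have G2: "integral {a..a+h} (g (u a)) = inner (v (a+h)) (u a) - inner (v a) (u a)"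
      using integral_unique[OF weak_sub[OF uV[of a]]] t h unfolding g_def by auto
    have LHv: "LH h = (1/h) * Pv"
      unfolding LH_def G1 G2 Pv_def D_def using h
      by (simp add: inner_diff_right inverse_eq_divide algebra_simps)
    show ?thesis using LHv RHv by simp
  qed
  obtain Bv where Bv: "Bv \<ge> 0" "\<forall>s\<in>{a..b}. norm (v s) \<le> Bv" using bounded_on[OF cv] by blast
  obtain Bk where Bk: "Bk \<ge> 0" "\<forall>s\<in>{a..b}. norm (\<kappa> s) \<le> Bk" using bounded_on[OF ck] by blast
  have Ddiff: "((\<lambda>h. D h x) \<longlongrightarrow> v x) (at_right 0)" if x: "x\<in>{a..b}" "x < b" for x
  proof (rule to_tendsto)
    fix e :: real assume e: "e>0"
    obtain d where d: "d>0" "\<forall>s h. s \<in> {a..b} \<longrightarrow> 0 < h \<longrightarrow> h < d \<longrightarrow> s + h \<le> b \<longrightarrow>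
            norm ((u (s+h) - u s) /\<^sub>R h - v s) \<le> e"
      using unif_dq[OF du cv e] by blast
    show "\<exists>d>0. \<forall>h. 0<h \<longrightarrow> h<d \<longrightarrow> norm (D h x - v x) \<le> e"
      using d x by (intro exI[of _ "min d (b - x)"]) (auto simp: D_def)
  qed
  have avg: "((\<lambda>h. (1/h) * integral {x..x+h} f) \<longlongrightarrow> f x) (at_right 0)"
    if f: "continuous_on {a..b} f" and x: "x \<in> {a..b}" "x < b" for f x
  proof (rule to_tendsto)
    fix e :: real assume e: "e>0"
    obtain d where d: "d>0" "\<forall>x h. x \<in> {a..b} \<longrightarrow> 0 < h \<longrightarrow> h < d \<longrightarrow> x + h \<le> b \<longrightarrow>
            \<bar>(1/h) * integral {x..x+h} f - f x\<bar> \<le> e"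
      using avg_bound[OF f e] by blast
    show "\<exists>d>0. \<forall>h. 0<h \<longrightarrow> h<d \<longrightarrow> norm ((1/h) * integral {x..x+h} f - f x) \<le> e"
      using d x by (intro exI[of _ "min d (b - x)"]) auto
  qed
  have L4: "((\<lambda>h. integral {a..t} (\<lambda>s. inner (\<kappa> s + \<kappa> (s+h)) (D h s))) \<longlongrightarrow> 2 * I) (at_right 0)"
  proof (rule to_tendsto)
    fix e :: real assume e: "e > 0"
    define K where "K = Bv + 1 + 2 * Bk"
    have K: "K > 0" using Bv Bk unfolding K_def by simp
    define ep where "ep = min 1 (e / (K * (t - a) + 1))"
    have KT: "K * (t - a) \<ge> 0" using K t by simp
    have ep: "ep > 0" "ep \<le> 1" using e KT unfolding ep_def by auto
    have ep3: "ep * K * (t - a) \<le> e"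
    proof -
      have "ep \<le> e / (K * (t - a) + 1)" unfolding ep_def by simp
      then have "ep * (K * (t - a)) \<le> e / (K * (t - a) + 1) * (K * (t - a))"
        using KT by (intro mult_right_mono) auto
      also have "\<dots> \<le> e"
      proof -
        have "e / (K * (t - a) + 1) * (K * (t - a)) = e * ((K * (t - a)) / (K * (t - a) + 1))" by simp
        also have "\<dots> \<le> e * 1" using e KT by (intro mult_left_mono) auto
        finally show ?thesis by simp
      qed
      finally show ?thesis by (simp add: mult.assoc)
    qed
    obtain d1 where d1: "d1>0" "\<forall>s h. s \<in> {a..b} \<longrightarrow> 0 < h \<longrightarrow> h < d1 \<longrightarrow> s + h \<le> b \<longrightarrow>
            norm ((u (s+h) - u s) /\<^sub>R h - v s) \<le> ep"
      using unif_dq[OF du cv ep(1)] by blast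
    have "uniformly_continuous_on {a..b} \<kappa>" using compact_uniformly_continuous[OF ck compact_Icc] .
    then obtain d2 where d2: "d2>0" "\<And>x x'. x\<in>{a..b} \<Longrightarrow> x'\<in>{a..b} \<Longrightarrow> dist x' x < d2 \<Longrightarrow> dist (\<kappa> x') (\<kappa> x) < ep"
      unfolding uniformly_continuous_on_def using ep by metis
    show "\<exists>d>0. \<forall>h. 0 < h \<longrightarrow> h < d \<longrightarrow> norm (integral {a..t} (\<lambda>s. inner (\<kappa> s + \<kappa> (s+h)) (D h s)) - 2 * I) \<le> e"
    proof (intro exI[of _ "min (min d1 d2) (b - t)"] conjI allI impI)
      show "min (min d1 d2) (b - t) > 0" using d1 d2 t by auto
      fix h assume h: "0 < h" "h < min (min d1 d2) (b - t)"
      let ?F = "\<lambda>s. inner (\<kappa> s + \<kappa> (s+h)) (D h s)"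
      let ?G = "\<lambda>s. 2 * inner (\<kappa> s) (v s)"
      have cF: "continuous_on {a..t} ?F"
      proof -
        have "continuous_on {a..t} (\<lambda>s. \<kappa> (s+h))" using cshift[OF ck, of a t h] h t by auto
        moreover have "continuous_on {a..t} (\<lambda>s. u (s+h))" using cshift[OF cu, of a t h] h t by auto
        moreover have "continuous_on {a..t} \<kappa>" "continuous_on {a..t} u"
          using continuous_on_subset[OF ck] continuous_on_subset[OF cu] t by auto
        ultimately show ?thesis unfolding D_def by (intro continuous_intros)
      qed
      have cG: "continuous_on {a..t} (\<lambda>s. inner (\<kappa> s) (v s))"
        using continuous_on_subset[OF ck] continuous_on_subset[OF cv] t by (intro continuous_intros) auto
      have HF: "(?F has_integral integral {a..t} ?F) {a..t}"
        using integrable_continuous_real[OF cF] has_integral_integral by blast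
      have HG: "(?G has_integral 2 * I) {a..t}"
        unfolding I_def using has_integral_mult_right[OF integrable_integral[OF integrable_continuous_real[OF cG]]] .
      have pw: "norm (?F s - ?G s) \<le> ep * K" if s: "s \<in> cbox a t" for s
      proof -
        have sb: "s \<in> {a..b}" "s + h \<in> {a..b}" "s + h \<le> b" using s t h by auto
        have n1: "norm (D h s - v s) \<le> ep" using d1(2) sb h unfolding D_def by auto
        have "dist (s+h) s < d2" using h by (simp add: dist_real_def)
        then have n2: "norm (\<kappa> (s+h) - \<kappa> s) \<le> ep" using d2(2)[of s "s+h"] sb by (simp add: dist_norm)
        have nD: "norm (D h s) \<le> Bv + 1"
        proof -
          have "norm (D h s) \<le> norm (v s) + norm (D h s - v s)" by (metis norm_triangle_sub add.commute)
          then show ?thesis using Bv(2) sb(1) n1 ep(2) by fastforce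
        qed
        have nk: "norm (\<kappa> s) \<le> Bk" using Bk sb by auto
        have "?F s - ?G s = inner (\<kappa> (s+h) - \<kappa> s) (D h s) + 2 * inner (\<kappa> s) (D h s - v s)"
          by (simp add: inner_add_left inner_diff_left inner_diff_right algebra_simps)
        then have "norm (?F s - ?G s) \<le> \<bar>inner (\<kappa> (s+h) - \<kappa> s) (D h s)\<bar> + 2 * \<bar>inner (\<kappa> s) (D h s - v s)\<bar>"
          by simp
        also have "\<dots> \<le> norm (\<kappa> (s+h) - \<kappa> s) * norm (D h s) + 2 * (norm (\<kappa> s) * norm (D h s - v s))"
          by (intro add_mono mult_left_mono Cauchy_Schwarz_ineq2) auto
        also have "\<dots> \<le> ep * (Bv + 1) + 2 * (Bk * ep)"
          by (intro add_mono mult_left_mono mult_mono n1 n2 nD nk) (use ep Bk in auto)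
        also have "\<dots> = ep * K" unfolding K_def by (simp add: algebra_simps)
        finally show ?thesis .
      qed
      have HFG: "((\<lambda>s. ?F s - ?G s) has_integral (integral {a..t} ?F - 2 * I)) (cbox a t)"
        using has_integral_diff[OF HF HG] by simp
      have "norm (integral {a..t} ?F - 2 * I) \<le> ep * K * (t - a)"
        using has_integral_bound[OF _ HFG pw] ep K t by simp
      then show "norm (integral {a..t} ?F - 2 * I) \<le> e" using ep3 t by simp
    qed
  qed
  have ab': "a < b" using t by simp
  have LHl: "(LH \<longlongrightarrow> inner (v t) (v t) - g (u t) t - inner (v a) (v a) + g (u a) a) (at_right 0)"
    unfolding LH_def using t ab'
    by (intro tendsto_intros Ddiff avg cg uV) auto
  have RHl: "(RH \<longlongrightarrow> 2 * I + q a - q t) (at_right 0)"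
    unfolding RH_def using t ab'
    by (intro tendsto_intros L4 avg cq) auto
  have ev: "eventually (\<lambda>h. LH h = RH h) (at_right 0)"
    unfolding eventually_at_right_field using t eq by (intro exI[of _ "b - t"]) auto
  have "(RH \<longlongrightarrow> inner (v t) (v t) - g (u t) t - inner (v a) (v a) + g (u a) a) (at_right 0)"
    using Lim_transform_eventually[OF LHl ev] .
  then have "inner (v t) (v t) - g (u t) t - inner (v a) (v a) + g (u a) a = 2 * I + q a - q t"
    using tendsto_unique[OF trivial_limit_at_right_real _ RHl] by blast
  then show ?thesis unfolding g_def q_def I_def by (simp add: algebra_simps)
qed

lemma EL:
  "((\<lambda>s. 2 * inner (\<kappa> s) (v s)) has_integral
     (inner (v b) (v b) + inner (S (u b)) (S (u b)) - inner (v a) (v a) - inner (S (u a)) (S (u a)))) {a..b}"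
proof (cases "a = b")
  case True
  then show ?thesis using has_integral_refl(2)[of _ a] by simp
next
  case False
  then have ab': "a < b" using ab by simp
  have cI: "continuous_on {a..b} (\<lambda>s. inner (\<kappa> s) (v s))" by (intro continuous_intros ck cv)
  have intI: "(\<lambda>s. inner (\<kappa> s) (v s)) integrable_on {a..b}" using integrable_continuous_real[OF cI] .
  define \<Psi> where "\<Psi> = (\<lambda>t. inner (v t) (v t) + inner (S (u t)) (S (u t)) - inner (v a) (v a) - inner (S (u a)) (S (u a))
      - 2 * integral {a..t} (\<lambda>s. inner (\<kappa> s) (v s)))"
  have cPsi: "continuous_on {a..b} \<Psi>"
    unfolding \<Psi>_def by (intro continuous_intros cv cSu indefinite_integral_continuous_1 intI)
  have "\<Psi> b = 0"
  proof (rule continuous_constant_on_closure[where S="{a..<b}" and f=\<Psi> and x=b])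
    show "continuous_on (closure {a..<b}) \<Psi>" using cPsi ab' by simp
    show "\<Psi> x = 0" if "x \<in> {a..<b}" for x using EL_lt[of x] that unfolding \<Psi>_def by simp
    show "b \<in> closure {a..<b}" using ab' by simp
  qed
  then have "2 * integral {a..b} (\<lambda>s. inner (\<kappa> s) (v s)) =
      inner (v b) (v b) + inner (S (u b)) (S (u b)) - inner (v a) (v a) - inner (S (u a)) (S (u a))"
    unfolding \<Psi>_def by simp
  then show ?thesis using has_integral_mult_right[OF integrable_integral[OF intI], of 2] by simp
qed

lemma VU:
  assumes t: "t \<in> {a..b}"
  shows "((\<lambda>s. inner (v s) (u s)) has_vector_derivative
           (inner (\<kappa> t) (u t) - inner (S (u t)) (S (u t)) + inner (v t) (v t))) (at t within {a..b})"
  using PLd[OF uV du[OF t] t] .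

end

lemma (in wsol) EL_sub:
  assumes "a \<le> x" "x \<le> y" "y \<le> b"
  shows "((\<lambda>s. 2 * inner (\<kappa> s) (v s)) has_integral
     (inner (v y) (v y) + inner (S (u y)) (S (u y)) - inner (v x) (v x) - inner (S (u x)) (S (u x)))) {x..y}"
proof -
  interpret A: wsol V S x y u v \<kappa> using sub assms by auto
  show ?thesis by (rule A.EL)
qed




lemma lin_sub: "lin_op_on V S \<Longrightarrow> subspace V" unfolding lin_op_on_def by blast
lemma lin_add: "lin_op_on V S \<Longrightarrow> x\<in>V \<Longrightarrow> y\<in>V \<Longrightarrow> S (x + y) = S x + S y" unfolding lin_op_on_def by blast
lemma lin_scale: "lin_op_on V S \<Longrightarrow> x\<in>V \<Longrightarrow> S (c *\<^sub>R x) = c *\<^sub>R S x" unfolding lin_op_on_def by blast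
lemma lin_diff:
  assumes "lin_op_on V S" "x\<in>V" "y\<in>V" shows "S (x - y) = S x - S y"
proof -
  have V: "subspace V" using lin_sub[OF assms(1)] .
  have m: "(-1) *\<^sub>R y \<in> V" using subspace_scale[OF V assms(3)] .
  have "S (x - y) = S (x + (-1) *\<^sub>R y)" by simp
  also have "\<dots> = S x + S ((-1) *\<^sub>R y)" using lin_add[OF assms(1) assms(2) m] .
  also have "\<dots> = S x - S y" using lin_scale[OF assms(1) assms(3), of "-1"] by simp
  finally show ?thesis .
qed

lemma F_mvt:
  fixes F :: "'h::real_inner \<Rightarrow> real"
  assumes sub: "subspace V"
    and Fd: "\<forall>x\<in>V. \<forall>w\<in>V. ((\<lambda>s. F (x + s *\<^sub>R w)) has_real_derivative inner (f x) w) (at 0)"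
    and x: "x\<in>V" and y: "y\<in>V"
  shows "\<exists>\<theta>. 0 < \<theta> \<and> \<theta> < 1 \<and> F y - F x = inner (f (x + \<theta> *\<^sub>R (y - x))) (y - x)"
proof -
  define w where "w = y - x"
  have w: "w \<in> V" using sub x y subspace_diff w_def by blast
  define \<phi> where "\<phi> = (\<lambda>s. F (x + s *\<^sub>R w))"
  have D: "(\<phi> has_real_derivative inner (f (x + s *\<^sub>R w)) w) (at s)" for s
  proof -
    have p: "x + s *\<^sub>R w \<in> V" using sub x w by (simp add: subspace_add subspace_scale)
    have "((\<lambda>r. F ((x + s *\<^sub>R w) + r *\<^sub>R w)) has_real_derivative inner (f (x + s *\<^sub>R w)) w) (at (s + -s))"
      using Fd p w by simp
    then have "((\<lambda>r. F ((x + s *\<^sub>R w) + (r + -s) *\<^sub>R w)) has_real_derivative inner (f (x + s *\<^sub>R w)) w) (at s)"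
      by (simp only: DERIV_shift)
    moreover have "(\<lambda>r. F ((x + s *\<^sub>R w) + (r + -s) *\<^sub>R w)) = \<phi>"
      unfolding \<phi>_def by (auto simp: algebra_simps)
    ultimately show ?thesis by simp
  qed
  obtain z where z: "0 < z" "z < 1" "\<phi> 1 - \<phi> 0 = (1 - 0) * inner (f (x + z *\<^sub>R w)) w"
    using MVT2[of 0 1 \<phi> "\<lambda>s. inner (f (x + s *\<^sub>R w)) w"] D by auto
  then show ?thesis unfolding \<phi>_def w_def by (intro exI[of _ z]) auto
qed

lemma vec_dq:
  fixes u :: "real \<Rightarrow> 'a::real_normed_vector"
  assumes "(u has_vector_derivative u') (at t within X)"
  shows "((\<lambda>s. (u s - u t) /\<^sub>R (s - t)) \<longlongrightarrow> u') (at t within X)"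
proof -
  from assms have "bounded_linear (\<lambda>x::real. x *\<^sub>R u') \<and> ((\<lambda>y. (1 / norm (y - t)) *\<^sub>R (u y - (u t + (y - t) *\<^sub>R u'))) \<longlongrightarrow> 0) (at t within X)"
    by (simp only: has_vector_derivative_def has_derivative_within)
  then have R: "((\<lambda>y. (1 / norm (y - t)) *\<^sub>R (u y - (u t + (y - t) *\<^sub>R u'))) \<longlongrightarrow> 0) (at t within X)"
    by (rule conjunct2)
  have Rn: "((\<lambda>y. norm ((1 / norm (y - t)) *\<^sub>R (u y - (u t + (y - t) *\<^sub>R u')))) \<longlongrightarrow> 0) (at t within X)"
    using tendsto_norm_zero[OF R] .
  have ev: "eventually (\<lambda>y. norm ((u y - u t) /\<^sub>R (y - t) - u') \<le> norm ((1 / norm (y - t)) *\<^sub>R (u y - (u t + (y - t) *\<^sub>R u')))) (at t within X)"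
  proof -
    have "eventually (\<lambda>y. y \<noteq> t) (at t within X)" by (simp add: eventually_at_filter)
    then show ?thesis
    proof (rule eventually_mono)
      fix y assume y: "y \<noteq> t"
      have e0: "u y - (u t + (y - t) *\<^sub>R u') = (u y - u t) - (y - t) *\<^sub>R u'" by simp
      have "(1 / (y - t)) *\<^sub>R (u y - (u t + (y - t) *\<^sub>R u')) = (1/(y-t)) *\<^sub>R (u y - u t) - (1/(y-t)) *\<^sub>R ((y-t) *\<^sub>R u')"
        unfolding e0 by (simp only: scaleR_diff_right)
      also have "\<dots> = (u y - u t) /\<^sub>R (y - t) - u'" using y by (simp add: inverse_eq_divide)
      finally have "(u y - u t) /\<^sub>R (y - t) - u' = (1 / (y - t)) *\<^sub>R (u y - (u t + (y - t) *\<^sub>R u'))" by simp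
      then show "norm ((u y - u t) /\<^sub>R (y - t) - u') \<le> norm ((1 / norm (y - t)) *\<^sub>R (u y - (u t + (y - t) *\<^sub>R u')))"
        by simp
    qed
  qed
  have "((\<lambda>y. (u y - u t) /\<^sub>R (y - t) - u') \<longlongrightarrow> 0) (at t within X)"
    using Lim_null_comparison[OF ev Rn] .
  then show ?thesis by (rule LIM_zero_cancel)
qed

lemma f_tendsto:
  assumes lin: "lin_op_on V S"
    and floc: "\<forall>K>0. \<exists>L. \<forall>x\<in>V. \<forall>y\<in>V. norm (S x) \<le> K \<longrightarrow> norm (S y) \<le> K \<longrightarrow>
                     norm (f x - f y) \<le> L * norm (S (x - y))"
    and lim: "((\<lambda>s. S (p s)) \<longlongrightarrow> S q) F" and evV: "eventually (\<lambda>s. p s \<in> V) F" and q: "q \<in> V"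
  shows "((\<lambda>s. f (p s)) \<longlongrightarrow> f q) F"
proof -
  define K where "K = norm (S q) + 1"
  have K: "K > 0" unfolding K_def by (simp add: add_nonneg_pos)
  obtain L where L: "\<forall>x\<in>V. \<forall>y\<in>V. norm (S x) \<le> K \<longrightarrow> norm (S y) \<le> K \<longrightarrow> norm (f x - f y) \<le> L * norm (S (x - y))"
    using floc K by blast
  define L' where "L' = max L 0"
  have ev1: "eventually (\<lambda>s. dist (S (p s)) (S q) < 1) F" using lim by (simp add: tendsto_iff)
  have ev: "eventually (\<lambda>s. norm (f (p s) - f q) \<le> L' * norm (S (p s) - S q)) F"
    using ev1 evV
  proof (rule eventually_elim2)
    fix s assume d: "dist (S (p s)) (S q) < 1" and pV: "p s \<in> V"
    have "norm (S (p s)) \<le> norm (S q) + norm (S (p s) - S q)" by (metis norm_triangle_sub add.commute)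
    then have n1: "norm (S (p s)) \<le> K" using d unfolding K_def by (simp add: dist_norm)
    have n2: "norm (S q) \<le> K" unfolding K_def by simp
    have "norm (f (p s) - f q) \<le> L * norm (S (p s - q))" using L pV q n1 n2 by blast
    also have "\<dots> = L * norm (S (p s) - S q)" using lin_diff[OF lin pV q] by simp
    also have "\<dots> \<le> L' * norm (S (p s) - S q)" unfolding L'_def by (intro mult_right_mono) auto
    finally show "norm (f (p s) - f q) \<le> L' * norm (S (p s) - S q)" .
  qed
  have g0: "((\<lambda>s. L' * norm (S (p s) - S q)) \<longlongrightarrow> 0) F"
  proof -
    have "((\<lambda>s. S (p s) - S q) \<longlongrightarrow> 0) F" using lim by (rule LIM_zero)
    then have "((\<lambda>s. norm (S (p s) - S q)) \<longlongrightarrow> 0) F" by (rule tendsto_norm_zero)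
    then show ?thesis by (rule tendsto_mult_right_zero)
  qed
  have "((\<lambda>s. f (p s) - f q) \<longlongrightarrow> 0) F" using Lim_null_comparison[OF ev g0] .
  then show ?thesis by (rule LIM_zero_cancel)
qed

lemma f_cont:
  assumes lin: "lin_op_on V S"
    and floc: "\<forall>K>0. \<exists>L. \<forall>x\<in>V. \<forall>y\<in>V. norm (S x) \<le> K \<longrightarrow> norm (S y) \<le> K \<longrightarrow>
                     norm (f x - f y) \<le> L * norm (S (x - y))"
    and uV: "\<And>s. s \<in> X \<Longrightarrow> u s \<in> V" and cSu: "continuous_on X (\<lambda>s. S (u s))"
  shows "continuous_on X (\<lambda>s. f (u s))"
  unfolding continuous_on_def
proof
  fix t assume t: "t \<in> X"
  have lim: "((\<lambda>s. S (u s)) \<longlongrightarrow> S (u t)) (at t within X)" using cSu t unfolding continuous_on_def by blast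
  have ev: "eventually (\<lambda>s. u s \<in> V) (at t within X)" using uV by (auto simp: eventually_at_filter)
  show "((\<lambda>s. f (u s)) \<longlongrightarrow> f (u t)) (at t within X)" using f_tendsto[OF lin floc lim ev uV[OF t]] .
qed

lemma F_chain:
  fixes F :: "'h::real_inner \<Rightarrow> real"
  assumes lin: "lin_op_on V S"
    and Fd: "\<forall>x\<in>V. \<forall>w\<in>V. ((\<lambda>s. F (x + s *\<^sub>R w)) has_real_derivative inner (f x) w) (at 0)"
    and floc: "\<forall>K>0. \<exists>L. \<forall>x\<in>V. \<forall>y\<in>V. norm (S x) \<le> K \<longrightarrow> norm (S y) \<le> K \<longrightarrow>
                     norm (f x - f y) \<le> L * norm (S (x - y))"
    and uV: "\<And>s. s\<in>X \<Longrightarrow> u s \<in> V" and t: "t\<in>X"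
    and du: "(u has_vector_derivative u') (at t within X)"
    and cSu: "continuous (at t within X) (\<lambda>s. S (u s))"
  shows "((\<lambda>s. F (u s)) has_real_derivative inner (f (u t)) u') (at t within X)"
proof -
  have V: "subspace V" using lin_sub[OF lin] .
  have ex: "\<exists>p. p \<in> V \<and> norm (S p - S (u t)) \<le> norm (S (u s) - S (u t)) \<and> F (u s) - F (u t) = inner (f p) (u s - u t)"
    if s: "s \<in> X" for s
  proof -
    obtain \<theta> where th: "0<\<theta>" "\<theta><1" "F (u s) - F (u t) = inner (f (u t + \<theta> *\<^sub>R (u s - u t))) (u s - u t)"
      using F_mvt[OF V Fd uV[OF t] uV[OF s]] by blast
    define p where "p = u t + \<theta> *\<^sub>R (u s - u t)"
    have d: "u s - u t \<in> V" using V uV t s subspace_diff by blast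
    have d2: "\<theta> *\<^sub>R (u s - u t) \<in> V" using V d by (simp add: subspace_scale)
    have pV: "p \<in> V" unfolding p_def using V uV[OF t] d2 by (simp add: subspace_add)
    have "S p = S (u t) + \<theta> *\<^sub>R (S (u s) - S (u t))"
      unfolding p_def lin_add[OF lin uV[OF t] d2] lin_scale[OF lin d] lin_diff[OF lin uV[OF s] uV[OF t]] ..
    then have "S p - S (u t) = \<theta> *\<^sub>R (S (u s) - S (u t))" by simp
    then have "norm (S p - S (u t)) = \<theta> * norm (S (u s) - S (u t))" using th by simp
    also have "\<dots> \<le> norm (S (u s) - S (u t))" using th by (simp add: mult_left_le_one_le)
    finally show ?thesis using pV th(3) unfolding p_def by blast
  qed
  define \<xi> where "\<xi> = (\<lambda>s. SOME p. p \<in> V \<and> norm (S p - S (u t)) \<le> norm (S (u s) - S (u t)) \<and> F (u s) - F (u t) = inner (f p) (u s - u t))"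
  have xi: "\<xi> s \<in> V \<and> norm (S (\<xi> s) - S (u t)) \<le> norm (S (u s) - S (u t)) \<and> F (u s) - F (u t) = inner (f (\<xi> s)) (u s - u t)"
    if "s \<in> X" for s
    unfolding \<xi>_def using someI_ex[OF ex[OF that]] .
  have evX: "eventually (\<lambda>s. s \<in> X \<and> s \<noteq> t) (at t within X)" by (simp add: eventually_at_filter)
  have limS: "((\<lambda>s. S (u s)) \<longlongrightarrow> S (u t)) (at t within X)" using cSu by (simp add: continuous_within)
  have limSx: "((\<lambda>s. S (\<xi> s)) \<longlongrightarrow> S (u t)) (at t within X)"
  proof -
    have g0: "((\<lambda>s. norm (S (u s) - S (u t))) \<longlongrightarrow> 0) (at t within X)"
      using tendsto_norm_zero[OF LIM_zero[OF limS]] .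
    have ev: "eventually (\<lambda>s. norm (S (\<xi> s) - S (u t)) \<le> norm (S (u s) - S (u t))) (at t within X)"
      using evX by (rule eventually_mono) (use xi in blast)
    have "((\<lambda>s. S (\<xi> s) - S (u t)) \<longlongrightarrow> 0) (at t within X)" using Lim_null_comparison[OF ev g0] .
    then show ?thesis by (rule LIM_zero_cancel)
  qed
  have evV: "eventually (\<lambda>s. \<xi> s \<in> V) (at t within X)"
    using evX by (rule eventually_mono) (use xi in blast)
  have limf: "((\<lambda>s. f (\<xi> s)) \<longlongrightarrow> f (u t)) (at t within X)" using f_tendsto[OF lin floc limSx evV uV[OF t]] .
  have limq: "((\<lambda>s. inner (f (\<xi> s)) ((u s - u t) /\<^sub>R (s - t))) \<longlongrightarrow> inner (f (u t)) u') (at t within X)"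
    by (intro tendsto_inner limf vec_dq[OF du])
  have evq: "eventually (\<lambda>s. inner (f (\<xi> s)) ((u s - u t) /\<^sub>R (s - t)) = (F (u s) - F (u t)) / (s - t)) (at t within X)"
    using evX by (rule eventually_mono) (use xi in \<open>auto simp: inverse_eq_divide\<close>)
  have "((\<lambda>s. (F (u s) - F (u t)) / (s - t)) \<longlongrightarrow> inner (f (u t)) u') (at t within X)"
    using Lim_transform_eventually[OF limq evq] .
  then show ?thesis by (simp add: has_field_derivative_iff)
qed

lemma F_nonpos:
  fixes F :: "'h::real_inner \<Rightarrow> real"
  assumes lin: "lin_op_on V S"
    and Fd: "\<forall>x\<in>V. \<forall>w\<in>V. ((\<lambda>s. F (x + s *\<^sub>R w)) has_real_derivative inner (f x) w) (at 0)"
    and F0: "F 0 = 0" and NL1: "\<forall>x\<in>V. inner x (f x) \<le> 0" and x: "x \<in> V"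
  shows "F x \<le> 0"
proof -
  have V: "subspace V" using lin_sub[OF lin] .
  obtain \<theta> where th: "0<\<theta>" "\<theta><1" "F x - F 0 = inner (f (0 + \<theta> *\<^sub>R (x - 0))) (x - 0)"
    using F_mvt[OF V Fd subspace_0[OF V] x] by blast
  have tx: "\<theta> *\<^sub>R x \<in> V" using V x by (simp add: subspace_scale)
  have "inner (\<theta> *\<^sub>R x) (f (\<theta> *\<^sub>R x)) \<le> 0" using NL1 tx by blast
  then have "\<theta> * inner (f (\<theta> *\<^sub>R x)) x \<le> 0" by (simp add: inner_commute)
  then have "inner (f (\<theta> *\<^sub>R x)) x \<le> 0" using th by (simp add: mult_le_0_iff)
  then show ?thesis using th F0 by simp
qed

lemma adj_norm:
  fixes B :: "real \<Rightarrow> 'a::real_inner \<Rightarrow>\<^sub>L 'b::real_inner" and Bs :: "real \<Rightarrow> 'b \<Rightarrow>\<^sub>L 'a"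
  assumes adj: "\<forall>t x y. inner (blinfun_apply (B t) x) y = inner x (blinfun_apply (Bs t) y)"
  shows "norm (Bs s - Bs r) \<le> norm (B s - B r)"
proof (rule norm_blinfun_bound)
  show "0 \<le> norm (B s - B r)" by simp
  fix y
  define z where "z = blinfun_apply (Bs s - Bs r) y"
  have "(norm z)\<^sup>2 = inner z z" by (simp add: power2_norm_eq_inner)
  also have "inner z z = inner (blinfun_apply (B s - B r) z) y"
    unfolding z_def using adj by (simp add: blinfun.diff_left inner_diff_left inner_diff_right)
  also have "\<dots> \<le> norm (blinfun_apply (B s - B r) z) * norm y" by (rule norm_cauchy_schwarz)
  also have "\<dots> \<le> norm (B s - B r) * norm z * norm y"
    using norm_blinfun[of "B s - B r" z] by (intro mult_right_mono) auto
  finally have *: "(norm z)\<^sup>2 \<le> norm (B s - B r) * norm z * norm y" .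
  show "norm z \<le> norm (B s - B r) * norm y"
  proof (cases "norm z = 0")
    case True then show ?thesis by simp
  next
    case False
    then have "norm z > 0" by simp
    moreover have "norm z * norm z \<le> (norm (B s - B r) * norm y) * norm z"
      using * by (simp add: power2_eq_square algebra_simps)
    ultimately show ?thesis by simp
  qed
qed

lemma adj_cont:
  fixes B :: "real \<Rightarrow> 'a::real_inner \<Rightarrow>\<^sub>L 'b::real_inner" and Bs :: "real \<Rightarrow> 'b \<Rightarrow>\<^sub>L 'a"
  assumes adj: "\<forall>t x y. inner (blinfun_apply (B t) x) y = inner x (blinfun_apply (Bs t) y)"
    and gc: "continuous_on X g" and eq: "\<forall>s\<in>X. g s = B s"
  shows "continuous_on X Bs"
  unfolding continuous_on_iff
proof (intro ballI allI impI)
  fix x e assume x: "x \<in> X" and e: "(0::real) < e"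
  obtain d where d: "d>0" "\<forall>x'\<in>X. dist x' x < d \<longrightarrow> dist (g x') (g x) < e"
    using gc x e unfolding continuous_on_iff by blast
  show "\<exists>d>0. \<forall>x'\<in>X. dist x' x < d \<longrightarrow> dist (Bs x') (Bs x) < e"
  proof (intro exI[of _ d] conjI ballI impI)
    show "d > 0" by fact
    fix x' assume x': "x' \<in> X" and dx: "dist x' x < d"
    have "dist (Bs x') (Bs x) = norm (Bs x' - Bs x)" by (simp add: dist_norm)
    also have "\<dots> \<le> norm (B x' - B x)" by (rule adj_norm[OF adj])
    also have "\<dots> = dist (g x') (g x)" using eq x x' by (simp add: dist_norm)
    also have "\<dots> < e" using d(2) x' dx by auto
    finally show "dist (Bs x') (Bs x) < e" .
  qed
qed




locale prob =
  fixes V :: "'h::{real_inner,complete_space} set" and S :: "'h \<Rightarrow> 'h"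
    and B1 B1s :: "real \<Rightarrow> 'h \<Rightarrow>\<^sub>L 'h"
    and B2 :: "real \<Rightarrow> 'u::{real_inner,complete_space} \<Rightarrow>\<^sub>L 'h"
    and B2s :: "real \<Rightarrow> 'h \<Rightarrow>\<^sub>L 'u"
    and tt m M :: "nat \<Rightarrow> real" and \<tau> lam1 :: real
    and f :: "'h \<Rightarrow> 'h" and F :: "'h \<Rightarrow> real"
    and u0 u1 :: 'h and u u' :: "real \<Rightarrow> 'h"
  assumes lin: "lin_op_on V S"
    and lam_pos: "lam1 > 0"
    and poincare: "\<forall>v\<in>V. lam1 * (norm v)\<^sup>2 \<le> (norm (S v))\<^sup>2"
    and B1_adj: "\<forall>t x y. inner (blinfun_apply (B1 t) x) y = inner x (blinfun_apply (B1s t) y)"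
    and B2_adj: "\<forall>t x y. inner (blinfun_apply (B2 t) x) y = inner x (blinfun_apply (B2s t) y)"
    and tt0: "tt 0 = 0" and tt_mono: "strict_mono tt"
    and tt_lim: "filterlim tt at_top sequentially"
    and B2_off: "\<forall>n. \<forall>t\<in>{tt (2*n)..<tt (2*n+1)}. B2 t = 0"
    and B1_off: "\<forall>n. \<forall>t\<in>{tt (2*n+1)..<tt (2*n+2)}. B1 t = 0"
    and B1_C1: "\<forall>n. \<exists>g g'.
        (\<forall>s\<in>{tt (2*n)..tt (2*n+1)}. (g has_vector_derivative g' s) (at s within {tt (2*n)..tt (2*n+1)}))
        \<and> continuous_on {tt (2*n)..tt (2*n+1)} g'
        \<and> (\<forall>s\<in>{tt (2*n)..<tt (2*n+1)}. g s = B1 s)"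
    and B2_C1: "\<forall>n. \<exists>g g'.
        (\<forall>s\<in>{tt (2*n+1)..tt (2*n+2)}. (g has_vector_derivative g' s) (at s within {tt (2*n+1)..tt (2*n+2)}))
        \<and> continuous_on {tt (2*n+1)..tt (2*n+2)} g'
        \<and> (\<forall>s\<in>{tt (2*n+1)..<tt (2*n+2)}. g s = B2 s)"
    and cond_i: "\<forall>n. 0 < m (2*n) \<and> m (2*n) \<le> M (2*n) \<and>
        (\<forall>t\<in>{tt (2*n)..<tt (2*n+1)}. \<forall>x.
           m (2*n) * (norm x)\<^sup>2 \<le> (norm (blinfun_apply (B1s t) x))\<^sup>2 \<and>
           (norm (blinfun_apply (B1s t) x))\<^sup>2 \<le> M (2*n) * (norm x)\<^sup>2)"
    and cond_ii: "\<forall>n. 0 < M (2*n+1) \<and>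
        (\<forall>t\<in>{tt (2*n+1)..<tt (2*n+2)}. \<forall>x.
           (norm (blinfun_apply (B2s t) x))\<^sup>2 \<le> M (2*n+1) * (norm x)\<^sup>2)"
    and tau_pos: "\<tau> > 0" and tau_le: "\<forall>n. \<tau> \<le> tt (Suc (2*n)) - tt (2*n)"
    and f_loclip: "\<forall>K>0. \<exists>L. \<forall>x\<in>V. \<forall>y\<in>V. norm (S x) \<le> K \<longrightarrow> norm (S y) \<le> K \<longrightarrow>
                     norm (f x - f y) \<le> L * norm (S (x - y))"
    and F0: "F 0 = 0"
    and F_deriv: "\<forall>x\<in>V. \<forall>v\<in>V. ((\<lambda>s. F (x + s *\<^sub>R v)) has_real_derivative inner (f x) v) (at 0)"
    and NL1: "\<forall>x\<in>V. inner x (f x) \<le> 0"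
    and NL2: "\<forall>x\<in>V. inner x (f x) - F x \<le> 0"
    and sol: "delayed_wave_solution V S B1 B1s B2 B2s \<tau> f u0 u1 u u'"
begin

definition k :: "real \<Rightarrow> 'h" where
  "k s = f (u s) - blinfun_apply (B1 s) (blinfun_apply (B1s s) (u' s))
            - blinfun_apply (B2 s) (blinfun_apply (B2s s) (u' (s - \<tau>)))"

definition E :: "real \<Rightarrow> real" where "E = energy_S S F u u'"

lemma Vsub: "subspace V" using lin_sub[OF lin] .

lemma uV0: "t \<ge> 0 \<Longrightarrow> u t \<in> V" using sol unfolding delayed_wave_solution_def by blast
lemma cu0: "continuous_on {0..} u" using sol unfolding delayed_wave_solution_def by blast
lemma cSu0: "continuous_on {0..} (\<lambda>t. S (u t))" using sol unfolding delayed_wave_solution_def by blast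
lemma cv0: "continuous_on {0..} u'" using sol unfolding delayed_wave_solution_def by blast
lemma du0: "t \<ge> 0 \<Longrightarrow> (u has_vector_derivative u' t) (at t within {0..})"
  using sol unfolding delayed_wave_solution_def by blast
lemma weak_all: "\<forall>\<phi>\<in>V. \<forall>t\<ge>0.
        ((\<lambda>s. inner (f (u s)) \<phi> - inner (S (u s)) (S \<phi>)
              - inner (blinfun_apply (B1 s) (blinfun_apply (B1s s) (u' s))) \<phi>
              - inner (blinfun_apply (B2 s) (blinfun_apply (B2s s) (u' (s - \<tau>)))) \<phi>)
          has_integral (inner (u' t) \<phi> - inner u1 \<phi>)) {0..t}"
  using sol[unfolded delayed_wave_solution_def] by (elim conjE)

lemma u10: "u' 0 = u1" using sol[unfolded delayed_wave_solution_def] by (elim conjE)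

lemma k_eq: "(\<lambda>s. inner (f (u s)) \<phi> - inner (S (u s)) (S \<phi>)
              - inner (blinfun_apply (B1 s) (blinfun_apply (B1s s) (u' s))) \<phi>
              - inner (blinfun_apply (B2 s) (blinfun_apply (B2s s) (u' (s - \<tau>)))) \<phi>)
         = (\<lambda>s. inner (k s) \<phi> - inner (S (u s)) (S \<phi>))"
  unfolding k_def by (rule ext) (simp add: inner_diff_left)

lemma weak0: "\<phi> \<in> V \<Longrightarrow> t \<ge> 0 \<Longrightarrow>
   ((\<lambda>s. inner (k s) \<phi> - inner (S (u s)) (S \<phi>)) has_integral (inner (u' t) \<phi> - inner (u' 0) \<phi>)) {0..t}"
  using weak_all unfolding k_eq u10 by blast

lemma piece_wsol:
  assumes x: "0 \<le> x" "x \<le> y" and ck: "continuous_on {x..y} k"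
  shows "wsol V S x y u u' k"
proof
  have sub: "{x..y} \<subseteq> {0..}" using x by auto
  show "x \<le> y" by fact
  show "u s \<in> V" if "s \<in> {x..y}" for s using uV0 that x by auto
  show "continuous_on {x..y} u" using continuous_on_subset[OF cu0 sub] .
  show "continuous_on {x..y} (\<lambda>s. S (u s))" using continuous_on_subset[OF cSu0 sub] .
  show "continuous_on {x..y} u'" using continuous_on_subset[OF cv0 sub] .
  show "continuous_on {x..y} k" by fact
  show "(u has_vector_derivative u' s) (at s within {x..y})" if "s \<in> {x..y}" for s
    using has_vector_derivative_within_subset[OF du0 sub] that x by auto
  show "((\<lambda>s. inner (k s) \<phi> - inner (S (u s)) (S \<phi>)) has_integral (inner (u' z) \<phi> - inner (u' x) \<phi>)) {x..z}"
    if phi: "\<phi> \<in> V" and z: "z \<in> {x..y}" for \<phi> z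
  proof -
    let ?g = "\<lambda>s. inner (k s) \<phi> - inner (S (u s)) (S \<phi>)"
    have I1: "(?g has_integral (inner (u' z) \<phi> - inner (u' 0) \<phi>)) {0..z}" using weak0[OF phi] z x by auto
    have I2: "(?g has_integral (inner (u' x) \<phi> - inner (u' 0) \<phi>)) {0..x}" using weak0[OF phi] x by auto
    have int: "?g integrable_on {0..z}" using I1 by blast
    have "integral {0..x} ?g + integral {x..z} ?g = integral {0..z} ?g"
      using Henstock_Kurzweil_Integration.integral_combine[OF x(1) _ int] z by auto
    then have "integral {x..z} ?g = inner (u' z) \<phi> - inner (u' x) \<phi>"
      using integral_unique[OF I1] integral_unique[OF I2] by simp
    moreover have "?g integrable_on {x..z}" using integrable_subinterval_real[OF int] z x by auto
    ultimately show ?thesis by (metis has_integral_integral)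
  qed
qed

lemma Fu_deriv: "t \<ge> 0 \<Longrightarrow> ((\<lambda>s. F (u s)) has_real_derivative inner (f (u t)) (u' t)) (at t within {0..})"
proof -
  assume t: "t \<ge> 0"
  have c: "continuous (at t within {0..}) (\<lambda>s. S (u s))"
    using cSu0 t by (simp add: continuous_on_eq_continuous_within)
  have uVX: "\<And>s. s \<in> {0..} \<Longrightarrow> u s \<in> V" using uV0 by simp
  have tX: "t \<in> {0..}" using t by simp
  show ?thesis using F_chain[OF lin F_deriv f_loclip uVX tX du0[OF t] c] .
qed

lemma E_cont: "continuous_on {0..} E"
proof -
  have cF: "continuous_on {0..} (\<lambda>s. F (u s))"
    unfolding continuous_on_eq_continuous_within
  proof
    fix x :: real assume "x \<in> {0..}"
    then show "continuous (at x within {0..}) (\<lambda>s. F (u s))" using DERIV_continuous[OF Fu_deriv[of x]] by simp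
  qed
  show ?thesis unfolding E_def energy_S_def by (intro continuous_intros cSu0 cv0 cF)
qed

lemma F_le0: "x \<in> V \<Longrightarrow> F x \<le> 0" using F_nonpos[OF lin F_deriv F0 NL1] .

lemma E_ge: "t \<ge> 0 \<Longrightarrow> (norm (u' t))\<^sup>2 \<le> 2 * E t \<and> (norm (S (u t)))\<^sup>2 \<le> 2 * E t \<and> E t \<ge> 0"
proof -
  assume t: "t \<ge> 0"
  have F: "F (u t) \<le> 0" using F_le0[OF uV0[OF t]] .
  have a: "0 \<le> (norm (S (u t)))\<^sup>2" "0 \<le> (norm (u' t))\<^sup>2" by simp_all
  have gen: "\<And>X Y Fv::real. Fv \<le> 0 \<Longrightarrow> 0 \<le> X \<Longrightarrow> 0 \<le> Y \<Longrightarrow>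
      Y \<le> 2 * (1/2 * (X + Y) - Fv) \<and> X \<le> 2 * (1/2 * (X + Y) - Fv) \<and> 0 \<le> 1/2 * (X + Y) - Fv"
    by (intro conjI; simp add: algebra_simps)
  show ?thesis unfolding E_def energy_S_def using gen[OF F a] .
qed

lemma energy_id:
  assumes x: "0 \<le> x" "x \<le> y" and ck: "continuous_on {x..y} k"
  shows "((\<lambda>s. inner (f (u s) - k s) (u' s)) has_integral (E x - E y)) {x..y}"
proof -
  interpret W: wsol V S x y u u' k using piece_wsol[OF x ck] .
  have I1: "((\<lambda>s. 2 * inner (k s) (u' s)) has_integral
     (inner (u' y) (u' y) + inner (S (u y)) (S (u y)) - inner (u' x) (u' x) - inner (S (u x)) (S (u x)))) {x..y}"
    using W.EL .
  have I2: "((\<lambda>s. inner (f (u s)) (u' s)) has_integral (F (u y) - F (u x))) {x..y}"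
  proof (rule fundamental_theorem_of_calculus[OF x(2)])
    fix s assume s: "s \<in> {x..y}"
    have "((\<lambda>s. F (u s)) has_real_derivative inner (f (u s)) (u' s)) (at s within {x..y})"
      using DERIV_subset[OF Fu_deriv] s x by auto
    then show "((\<lambda>s. F (u s)) has_vector_derivative inner (f (u s)) (u' s)) (at s within {x..y})"
      using has_real_derivative_iff_has_vector_derivative by blast
  qed
  have I3: "((\<lambda>s. inner (f (u s)) (u' s) - (1/2) * (2 * inner (k s) (u' s))) has_integral
      (F (u y) - F (u x) - (1/2) * (inner (u' y) (u' y) + inner (S (u y)) (S (u y)) - inner (u' x) (u' x) - inner (S (u x)) (S (u x))))) {x..y}"
    using has_integral_diff[OF I2 has_integral_mult_right[OF I1, of "1/2"]] .
  have eqf: "inner (f (u s)) (u' s) - (1/2) * (2 * inner (k s) (u' s)) = inner (f (u s) - k s) (u' s)" for s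
    by (simp add: inner_diff_left)
  have eqv: "F (u y) - F (u x) - (1/2) * (inner (u' y) (u' y) + inner (S (u y)) (S (u y)) - inner (u' x) (u' x) - inner (S (u x)) (S (u x)))
     = E x - E y"
    unfolding E_def energy_S_def by (simp add: power2_norm_eq_inner algebra_simps)
  show ?thesis using I3 unfolding eqf eqv .
qed

end



lemma le_at_end:
  fixes g :: "real \<Rightarrow> real"
  assumes "continuous_on {x..b} g" "x < b" "\<And>y. y \<in> {x..<b} \<Longrightarrow> g y \<le> c"
  shows "g b \<le> c"
proof (rule continuous_le_on_closure[where S="{x..<b}" and f=g and x=b and a=c])
  show "continuous_on (closure {x..<b}) g" using assms by simp
  show "b \<in> closure {x..<b}" using assms by simp
  show "g y \<le> c" if "y \<in> {x..<b}" for y using assms that by blast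
qed

lemma amgm4:
  fixes A B Q :: real
  assumes "0 \<le> A" "0 \<le> B" "0 \<le> Q" "Q\<^sup>2 \<le> 4 * A * B"
  shows "Q \<le> A + B"
proof -
  have e: "(A + B)\<^sup>2 = (A - B)\<^sup>2 + 4 * (A * B)" by (simp add: power2_eq_square algebra_simps)
  have z: "0 \<le> (A - B)\<^sup>2" by simp
  have e2: "4 * A * B = 4 * (A * B)" by simp
  have "Q\<^sup>2 \<le> (A + B)\<^sup>2" using assms(4) e z e2 by linarith
  moreover have "0 \<le> A + B" using assms by simp
  ultimately show ?thesis by (rule power2_le_imp_le)
qed

lemma core_ineq:
  fixes X Y Z W U P P' Fv G c d T m M lam :: real
  assumes lam: "lam > 0" and m: "m > 0" and M: "M \<ge> 0"
    and P: "0 \<le> P" "P \<le> T / 4" and P': "\<bar>P'\<bar> \<le> 1"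
    and GF: "G - Fv \<le> 0" and c: "\<bar>c\<bar> \<le> Z * W" and d: "\<bar>d\<bar> \<le> Y * U"
    and mY: "m * Y\<^sup>2 \<le> Z\<^sup>2" and WU: "W\<^sup>2 \<le> M * U\<^sup>2" and UX: "lam * U\<^sup>2 \<le> X\<^sup>2"
    and nn: "0 \<le> X" "0 \<le> Y" "0 \<le> Z" "0 \<le> W" "0 \<le> U"
  shows "P\<^sup>2 * (1/2 * (X\<^sup>2 + Y\<^sup>2) - Fv) + (P\<^sup>2 * (G - c - X\<^sup>2 + Y\<^sup>2) + 2 * P * P' * d)
         \<le> (4 / (lam * m) + 3 * T\<^sup>2 / (32 * m) + M * T\<^sup>2 / (16 * lam)) * Z\<^sup>2"
proof -
  have U2: "U\<^sup>2 \<le> X\<^sup>2 / lam" using UX lam by (simp add: field_simps)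
  have Y2: "Y\<^sup>2 \<le> Z\<^sup>2 / m" using mY m by (simp add: field_simps)
  have h1: "P\<^sup>2 * (1/2 * (X\<^sup>2 + Y\<^sup>2) - Fv) + (P\<^sup>2 * (G - c - X\<^sup>2 + Y\<^sup>2) + 2 * P * P' * d)
      = P\<^sup>2 * (G - Fv) - 1/2 * (P\<^sup>2 * X\<^sup>2) + 3/2 * (P\<^sup>2 * Y\<^sup>2) - P\<^sup>2 * c + 2 * P * P' * d"
    by (simp add: algebra_simps)
  have h2: "P\<^sup>2 * (G - Fv) \<le> 0" using GF by (simp add: mult_nonneg_nonpos)
  have h3: "- (P\<^sup>2 * c) \<le> P\<^sup>2 * (Z * W)"
  proof -
    have "- c \<le> Z * W" using c by linarith
    then have "P\<^sup>2 * (- c) \<le> P\<^sup>2 * (Z * W)" by (intro mult_left_mono) auto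
    then show ?thesis by simp
  qed
  have h4: "2 * P * P' * d \<le> 2 * P * (Y * U)"
  proof -
    have "P' * d \<le> \<bar>P' * d\<bar>" by simp
    also have "\<dots> = \<bar>P'\<bar> * \<bar>d\<bar>" by (simp add: abs_mult)
    also have "\<dots> \<le> 1 * \<bar>d\<bar>" using P' by (intro mult_right_mono) auto
    also have "\<dots> \<le> Y * U" using d by simp
    finally have "P' * d \<le> Y * U" .
    then have "(2 * P) * (P' * d) \<le> (2 * P) * (Y * U)" using P by (intro mult_left_mono) auto
    then show ?thesis by (simp add: algebra_simps)
  qed
  have h5: "Z * W \<le> 1/4 * X\<^sup>2 + M / lam * Z\<^sup>2"
  proof (rule amgm4)
    show "0 \<le> 1/4 * X\<^sup>2" by simp
    show "0 \<le> M / lam * Z\<^sup>2" using M lam by simp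
    show "0 \<le> Z * W" using nn by simp
    have "(Z * W)\<^sup>2 = Z\<^sup>2 * W\<^sup>2" by (simp add: power_mult_distrib)
    also have "\<dots> \<le> Z\<^sup>2 * (M * U\<^sup>2)" using WU by (intro mult_left_mono) auto
    also have "\<dots> \<le> Z\<^sup>2 * (M * (X\<^sup>2 / lam))" using U2 M by (intro mult_left_mono) auto
    also have "\<dots> = 4 * (1/4 * X\<^sup>2) * (M / lam * Z\<^sup>2)" by (simp add: field_simps)
    finally show "(Z * W)\<^sup>2 \<le> 4 * (1/4 * X\<^sup>2) * (M / lam * Z\<^sup>2)" .
  qed
  have h6: "2 * P * (Y * U) \<le> 1/4 * (P\<^sup>2 * X\<^sup>2) + 4 * Y\<^sup>2 / lam"
  proof (rule amgm4)
    show "0 \<le> 1/4 * (P\<^sup>2 * X\<^sup>2)" by simp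
    show "0 \<le> 4 * Y\<^sup>2 / lam" using lam by simp
    show "0 \<le> 2 * P * (Y * U)" using nn P by simp
    have "(2 * P * (Y * U))\<^sup>2 = 4 * P\<^sup>2 * Y\<^sup>2 * U\<^sup>2" by (simp add: power_mult_distrib)
    also have "\<dots> \<le> 4 * P\<^sup>2 * Y\<^sup>2 * (X\<^sup>2 / lam)" using U2 by (intro mult_left_mono) auto
    also have "\<dots> = 4 * (1/4 * (P\<^sup>2 * X\<^sup>2)) * (4 * Y\<^sup>2 / lam)" by (simp add: field_simps)
    finally show "(2 * P * (Y * U))\<^sup>2 \<le> 4 * (1/4 * (P\<^sup>2 * X\<^sup>2)) * (4 * Y\<^sup>2 / lam)" .
  qed
  have h5'': "P\<^sup>2 * (Z * W) \<le> P\<^sup>2 * (1/4 * X\<^sup>2 + M / lam * Z\<^sup>2)" using h5 by (intro mult_left_mono) auto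
  have h5': "P\<^sup>2 * (Z * W) \<le> 1/4 * (P\<^sup>2 * X\<^sup>2) + P\<^sup>2 * (M / lam * Z\<^sup>2)"
    using h5'' by (simp add: distrib_left)
  have step: "P\<^sup>2 * (1/2 * (X\<^sup>2 + Y\<^sup>2) - Fv) + (P\<^sup>2 * (G - c - X\<^sup>2 + Y\<^sup>2) + 2 * P * P' * d)
      \<le> 3/2 * (P\<^sup>2 * Y\<^sup>2) + P\<^sup>2 * (M / lam * Z\<^sup>2) + 4 * Y\<^sup>2 / lam"
    using h1 h2 h3 h4 h5' h6 by linarith
  have T: "0 \<le> T" using P by simp
  have P2: "P\<^sup>2 \<le> T\<^sup>2 / 16"
  proof -
    have "P\<^sup>2 \<le> (T/4)\<^sup>2" using P by (intro power_mono) auto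
    then show ?thesis by (simp add: power_divide)
  qed
  have s1: "3/2 * (P\<^sup>2 * Y\<^sup>2) \<le> 3/2 * ((T\<^sup>2 / 16) * (Z\<^sup>2 / m))"
    using P2 Y2 by (intro mult_mono mult_left_mono) auto
  have s2: "P\<^sup>2 * (M / lam * Z\<^sup>2) \<le> (T\<^sup>2 / 16) * (M / lam * Z\<^sup>2)"
    using P2 M lam by (intro mult_right_mono) auto
  have s3: "4 * Y\<^sup>2 / lam \<le> 4 * (Z\<^sup>2 / m) / lam"
    using Y2 lam by (intro divide_right_mono) auto
  have fin: "3/2 * ((T\<^sup>2 / 16) * (Z\<^sup>2 / m)) + (T\<^sup>2 / 16) * (M / lam * Z\<^sup>2) + 4 * (Z\<^sup>2 / m) / lam
      = (4 / (lam * m) + 3 * T\<^sup>2 / (32 * m) + M * T\<^sup>2 / (16 * lam)) * Z\<^sup>2"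
    using lam m by (simp add: field_simps)
  show ?thesis using step s1 s2 s3 fin by linarith
qed




lemma absdiv_le1: "\<bar>x\<bar> \<le> T \<Longrightarrow> (T::real) > 0 \<Longrightarrow> \<bar>x / T\<bar> \<le> 1"
  by (simp add: abs_divide)

lemma prod_le_quarter:
  fixes x T :: real shows "x * (T - x) \<le> T\<^sup>2 / 4"
proof -
  have "0 \<le> (2*x - T)\<^sup>2" by simp
  moreover have "(2*x - T)\<^sup>2 = 4 * (x * x) - 4 * (x * T) + T\<^sup>2" by (simp add: power2_eq_square algebra_simps)
  moreover have "x * (T - x) = x * T - x * x" by (simp add: algebra_simps)
  ultimately show ?thesis by linarith
qed

lemma P_bounds:
  fixes a s T :: real assumes T: "T > 0" and s: "a \<le> s" "s \<le> a + T"
  shows "0 \<le> (s - a) * (a + T - s) / T" "(s - a) * (a + T - s) / T \<le> T / 4"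
proof -
  show "0 \<le> (s - a) * (a + T - s) / T" using T s by simp
  have "(s - a) * (a + T - s) = (s - a) * (T - (s - a))" by simp
  also have "\<dots> \<le> T\<^sup>2 / 4" by (rule prod_le_quarter)
  finally have "(s - a) * (a + T - s) / T \<le> (T\<^sup>2 / 4) / T" using T by (intro divide_right_mono) auto
  also have "\<dots> = T / 4" using T by (simp add: power2_eq_square)
  finally show "(s - a) * (a + T - s) / T \<le> T / 4" .
qed

lemma P_deriv:
  fixes a T :: real assumes T: "T > 0"
  shows "((\<lambda>s. (s - a) * (a + T - s) / T) has_real_derivative ((a + T - s) - (s - a)) / T) (at s within X)"
proof -
  have "((\<lambda>s. (s - a) * (a + T - s)) has_real_derivative ((a + T - s) - (s - a))) (at s within X)"
    by (auto intro!: derivative_eq_intros)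
  then show ?thesis by (rule DERIV_cdivide)
qed

lemma P_int:
  fixes a T :: real assumes T: "T > 0"
  shows "((\<lambda>s. ((s - a) * (a + T - s) / T)\<^sup>2) has_integral T^3/30) {a..a+T}"
proof -
  define c2 where "c2 = 1/(2*T)"
  define c3 where "c3 = 1/(5*T^2)"
  define A where "A = (\<lambda>s::real. (s-a)^3/3 - (s-a)^4 * c2 + (s-a)^5 * c3)"
  have D: "(A has_real_derivative ((s - a) * (a + T - s) / T)\<^sup>2) (at s within {a..a+T})" for s
  proof -
    have "(A has_real_derivative ((s-a)^2 - 4 * (s-a)^3 * c2 + 5 * (s-a)^4 * c3)) (at s within {a..a+T})"
      unfolding A_def by (auto intro!: derivative_eq_intros)
    moreover have "(s-a)^2 - 4 * (s-a)^3 * c2 + 5 * (s-a)^4 * c3 = ((s - a) * (a + T - s) / T)\<^sup>2"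
    proof -
      define x where "x = s - a"
      have e: "a + T - s = T - x" unfolding x_def by simp
      have "((s - a) * (a + T - s) / T)\<^sup>2 = (x * (T - x))\<^sup>2 / T^2" unfolding e x_def by (simp add: power_divide)
      also have "(x * (T - x))\<^sup>2 = x^2 * T^2 - 2 * x^3 * T + x^4" by algebra
      finally have 1: "((s - a) * (a + T - s) / T)\<^sup>2 = (x^2 * T^2 - 2 * x^3 * T + x^4) / T^2" .
      have 2: "x^2 - 4 * x^3 * c2 + 5 * x^4 * c3 = (x^2 * T^2 - 2 * x^3 * T + x^4) / T^2"
        unfolding c2_def c3_def using T by (simp add: field_simps power2_eq_square)
      show ?thesis using 1 2 unfolding x_def by simp
    qed
    ultimately show ?thesis by simp
  qed
  have "((\<lambda>s. ((s - a) * (a + T - s) / T)\<^sup>2) has_integral (A (a+T) - A a)) {a..a+T}"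
    using fundamental_theorem_of_calculus[of a "a+T" A] D T has_real_derivative_iff_has_vector_derivative by auto
  moreover have "A (a+T) - A a = T^3/30" unfolding A_def c2_def c3_def using T by (simp add: field_simps eval_nat_numeral)
  ultimately show ?thesis by simp
qed

context prob begin

lemma tt_ge0: "tt n \<ge> 0"
  using strict_mono_less_eq[OF tt_mono, of 0 n] tt0 by simp

lemma tt_lt: "tt n < tt (Suc n)" using strict_monoD[OF tt_mono] by simp

lemma tt_le: "m' \<le> n \<Longrightarrow> tt m' \<le> tt n" using strict_mono_less_eq[OF tt_mono] by simp

lemma even_k:
  shows "continuous_on {tt (2*n)..<tt (2*n+1)} k"
    and "\<And>s. s \<in> {tt (2*n)..<tt (2*n+1)} \<Longrightarrow>
           k s = f (u s) - blinfun_apply (B1 s) (blinfun_apply (B1s s) (u' s))"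
proof -
  let ?a = "tt (2*n)" and ?b = "tt (2*n+1)"
  obtain g g' where gd: "\<forall>s\<in>{?a..?b}. (g has_vector_derivative g' s) (at s within {?a..?b})"
    and geq: "\<forall>s\<in>{?a..<?b}. g s = B1 s"
    using B1_C1 by blast
  have gc: "continuous_on {?a..?b} g"
    unfolding continuous_on_eq_continuous_within using gd has_vector_derivative_continuous by blast
  have ss: "{?a..<?b} \<subseteq> {?a..?b}" by (intro subsetI) simp
  have gc': "continuous_on {?a..<?b} g" using continuous_on_subset[OF gc ss] .
  have Bc: "continuous_on {?a..<?b} B1s" using adj_cont[OF B1_adj gc' geq] .
  have sub: "{?a..<?b} \<subseteq> {0..}" using tt_ge0[of "2*n"] by auto
  have fu: "continuous_on {?a..<?b} (\<lambda>s. f (u s))"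
  proof (rule f_cont[OF lin f_loclip])
    show "u s \<in> V" if "s \<in> {?a..<?b}" for s using uV0 sub that by auto
    show "continuous_on {?a..<?b} (\<lambda>s. S (u s))" by (rule continuous_on_subset[OF cSu0 sub])
  qed
  have cv: "continuous_on {?a..<?b} u'" using continuous_on_subset[OF cv0 sub] .
  have c1: "continuous_on {?a..<?b} (\<lambda>s. f (u s) - blinfun_apply (g s) (blinfun_apply (B1s s) (u' s)))"
    by (intro continuous_intros fu gc' Bc cv)
  show keq: "k s = f (u s) - blinfun_apply (B1 s) (blinfun_apply (B1s s) (u' s))"
    if s: "s \<in> {?a..<?b}" for s
  proof -
    have "B2 s = 0" using B2_off s by blast
    then show ?thesis unfolding k_def by simp
  qed
  show "continuous_on {?a..<?b} k"
    by (rule continuous_on_eq[OF c1]) (use keq geq in auto)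
qed

lemma even_D:
  assumes s: "s \<in> {tt (2*n)..<tt (2*n+1)}"
  shows "inner (f (u s) - k s) (u' s) = (norm (blinfun_apply (B1s s) (u' s)))\<^sup>2"
    and "inner (k s) (u s) = inner (u s) (f (u s)) - inner (blinfun_apply (B1s s) (u' s)) (blinfun_apply (B1s s) (u s))"
proof -
  have "f (u s) - k s = blinfun_apply (B1 s) (blinfun_apply (B1s s) (u' s))" using even_k(2)[OF s] by simp
  then show "inner (f (u s) - k s) (u' s) = (norm (blinfun_apply (B1s s) (u' s)))\<^sup>2"
    using B1_adj by (simp add: power2_norm_eq_inner)
  show "inner (k s) (u s) = inner (u s) (f (u s)) - inner (blinfun_apply (B1s s) (u' s)) (blinfun_apply (B1s s) (u s))"
  proof -
    have "inner (k s) (u s) = inner (f (u s)) (u s) - inner (blinfun_apply (B1 s) (blinfun_apply (B1s s) (u' s))) (u s)"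
      using even_k(2)[OF s] by (simp add: inner_diff_left)
    also have "inner (blinfun_apply (B1 s) (blinfun_apply (B1s s) (u' s))) (u s) = inner (blinfun_apply (B1s s) (u' s)) (blinfun_apply (B1s s) (u s))"
      using B1_adj by blast
    finally show ?thesis by (simp add: inner_commute)
  qed
qed

lemma even_mono:
  assumes xy: "tt (2*n) \<le> x" "x \<le> y" "y \<le> tt (2*n+1)"
  shows "E y \<le> E x"
proof -
  let ?a = "tt (2*n)" and ?b = "tt (2*n+1)"
  have a0: "0 \<le> ?a" using tt_ge0 .
  have lt: "E y' \<le> E x" if y': "x \<le> y'" "y' < ?b" for y'
  proof -
    have "{x..y'} \<subseteq> {?a..<?b}" using xy y' by auto
    then have ck: "continuous_on {x..y'} k" using continuous_on_subset[OF even_k(1)[of n]] by blast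
    have H: "((\<lambda>s. inner (f (u s) - k s) (u' s)) has_integral (E x - E y')) {x..y'}"
      using energy_id[OF _ y'(1) ck] a0 xy by auto
    have "0 \<le> E x - E y'"
    proof (rule has_integral_nonneg[OF H])
      fix s assume "s \<in> {x..y'}"
      then have "s \<in> {?a..<?b}" using xy y' by auto
      then show "0 \<le> inner (f (u s) - k s) (u' s)" using even_D(1) by simp
    qed
    then show ?thesis by simp
  qed
  show ?thesis
  proof (cases "y < ?b")
    case True then show ?thesis using lt xy by auto
  next
    case False
    then have yb: "y = ?b" using xy by simp
    show ?thesis
    proof (cases "x = ?b")
      case True then show ?thesis using yb by simp
    next
      case False
      then have xb: "x < ?b" using xy by simp
      have "continuous_on {x..?b} E" using continuous_on_subset[OF E_cont] a0 xy by auto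
      then have "E ?b \<le> E x" using le_at_end[of x ?b E "E x"] xb lt by auto
      then show ?thesis using yb by simp
    qed
  qed
qed

lemma even_obs_lt:
  assumes b': "tt (2*n) < b'" "b' < tt (2*n+1)"
  defines "T \<equiv> tt (2*n+1) - tt (2*n)"
  defines "K \<equiv> 4 / (lam1 * m (2*n)) + 3 * T\<^sup>2 / (32 * m (2*n)) + M (2*n) * T\<^sup>2 / (16 * lam1)"
  shows "E b' * ((b' - tt (2*n))^3 / 30 + K) \<le> K * E (tt (2*n))"
proof -
  let ?a = "tt (2*n)"
  define T' where "T' = b' - ?a"
  have T': "T' > 0" using b' unfolding T'_def by simp
  have T'T: "T' \<le> T" using b' unfolding T'_def T_def by simp
  have a0: "0 \<le> ?a" using tt_ge0 .
  have ss: "{?a..b'} \<subseteq> {?a..<tt (2*n+1)}" using b' by auto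
  have ck: "continuous_on {?a..b'} k" using continuous_on_subset[OF even_k(1) ss] .
  interpret W: wsol V S ?a b' u u' k using piece_wsol[OF a0 _ ck] b' by simp
  have bT: "?a + T' = b'" unfolding T'_def by simp
  define P where "P = (\<lambda>s. (s - ?a) * (?a + T' - s) / T')"
  define P' where "P' = (\<lambda>s::real. ((?a + T' - s) - (s - ?a)) / T')"
  define \<phi> where "\<phi> = (\<lambda>s. inner (u' s) (u s))"
  define Vd where "Vd = (\<lambda>s. inner (k s) (u s) - inner (S (u s)) (S (u s)) + inner (u' s) (u' s))"
  define Q where "Q = (\<lambda>s. 2 * P s * P' s * \<phi> s + (P s)\<^sup>2 * Vd s)"
  define D where "D = (\<lambda>s. inner (f (u s) - k s) (u' s))"
  have dP: "(P has_real_derivative P' s) (at s within {?a..b'})" for s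
    unfolding P_def P'_def using P_deriv[OF T'] .
  have dphi: "(\<phi> has_real_derivative Vd s) (at s within {?a..b'})" if "s \<in> {?a..b'}" for s
    using W.VU[OF that] unfolding \<phi>_def Vd_def using has_real_derivative_iff_has_vector_derivative by blast
  have dh: "((\<lambda>s. P s * P s * \<phi> s) has_vector_derivative Q s) (at s within {?a..b'})" if s: "s \<in> {?a..b'}" for s
  proof -
    have "((\<lambda>s. P s * P s * \<phi> s) has_real_derivative ((P' s * P s + P' s * P s) * \<phi> s + Vd s * (P s * P s))) (at s within {?a..b'})"
      using DERIV_mult[OF DERIV_mult[OF dP dP] dphi[OF s]] .
    moreover have "(P' s * P s + P' s * P s) * \<phi> s + Vd s * (P s * P s) = Q s"
      unfolding Q_def by (simp add: power2_eq_square algebra_simps)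
    ultimately show ?thesis using has_real_derivative_iff_has_vector_derivative by auto
  qed
  have HQ0: "(Q has_integral (P b' * P b' * \<phi> b' - P ?a * P ?a * \<phi> ?a)) {?a..b'}"
    using fundamental_theorem_of_calculus[of ?a b' "\<lambda>s. P s * P s * \<phi> s" Q] dh b' by auto
  have Pend: "P b' = 0" "P ?a = 0" unfolding P_def using bT by auto
  have HQ: "(Q has_integral 0) {?a..b'}" using HQ0 Pend by simp
  have HD: "(D has_integral (E ?a - E b')) {?a..b'}" unfolding D_def using energy_id[OF a0 _ ck] b' by simp
  have HP: "((\<lambda>s. (P s)\<^sup>2) has_integral T'^3/30) {?a..b'}"
    using P_int[OF T', of ?a] bT unfolding P_def by simp
  have cE: "continuous_on {?a..b'} E" using continuous_on_subset[OF E_cont] a0 by auto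
  have cP: "continuous_on {?a..b'} P" unfolding P_def by (intro continuous_intros) (use T' in simp)
  have cPE: "continuous_on {?a..b'} (\<lambda>s. (P s)\<^sup>2 * E s)" by (intro continuous_intros cE cP)
  define IPE where "IPE = integral {?a..b'} (\<lambda>s. (P s)\<^sup>2 * E s)"
  have HPE: "((\<lambda>s. (P s)\<^sup>2 * E s) has_integral IPE) {?a..b'}"
    unfolding IPE_def using integrable_integral[OF integrable_continuous_real[OF cPE]] .
  have L1: "T'^3/30 * E b' \<le> IPE"
  proof (rule has_integral_le[OF has_integral_mult_left[OF HP] HPE])
    fix s assume s: "s \<in> {?a..b'}"
    have "E b' \<le> E s" using even_mono[of n s b'] s b' by auto
    then show "(P s)\<^sup>2 * E b' \<le> (P s)\<^sup>2 * E s" by (intro mult_left_mono) auto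
  qed
  have L2: "IPE + 0 \<le> K * (E ?a - E b')"
  proof (rule has_integral_le[OF has_integral_add[OF HPE HQ] has_integral_mult_right[OF HD]])
    fix s assume s: "s \<in> {?a..b'}"
    then have s2: "s \<in> {?a..<tt (2*n+1)}" using ss by auto
    have s0: "s \<ge> 0" using s a0 by auto
    have uVs: "u s \<in> V" using uV0[OF s0] .
    have ci: "0 < m (2*n)" "m (2*n) \<le> M (2*n)"
      "\<And>x. m (2*n) * (norm x)\<^sup>2 \<le> (norm (blinfun_apply (B1s s) x))\<^sup>2"
      "\<And>x. (norm (blinfun_apply (B1s s) x))\<^sup>2 \<le> M (2*n) * (norm x)\<^sup>2"
      using cond_i s2 by blast+
    have sT: "?a \<le> s" "s \<le> ?a + T'" using s bT by auto
    have Pnn: "0 \<le> P s" unfolding P_def using P_bounds(1)[OF T' sT] .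
    have PT: "P s \<le> T / 4"
    proof -
      have "P s \<le> T' / 4" unfolding P_def using P_bounds(2)[OF T' sT] .
      then show ?thesis using T'T by simp
    qed
    have P'1: "\<bar>P' s\<bar> \<le> 1"
    proof -
      have "\<bar>(?a + T' - s) - (s - ?a)\<bar> \<le> T'" using s bT by auto
      moreover have "P' s = ((?a + T' - s) - (s - ?a)) / T'" unfolding P'_def by simp
      ultimately show ?thesis using absdiv_le1[OF _ T'] by metis
    qed
    have core: "(P s)\<^sup>2 * (1/2 * ((norm (S (u s)))\<^sup>2 + (norm (u' s))\<^sup>2) - F (u s))
        + ((P s)\<^sup>2 * (inner (u s) (f (u s)) - inner (blinfun_apply (B1s s) (u' s)) (blinfun_apply (B1s s) (u s))
              - (norm (S (u s)))\<^sup>2 + (norm (u' s))\<^sup>2) + 2 * P s * P' s * inner (u' s) (u s))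
        \<le> (4 / (lam1 * m (2*n)) + 3 * T\<^sup>2 / (32 * m (2*n)) + M (2*n) * T\<^sup>2 / (16 * lam1))
           * (norm (blinfun_apply (B1s s) (u' s)))\<^sup>2"
    proof (rule core_ineq)
      show "lam1 > 0" by (rule lam_pos)
      show "m (2*n) > 0" by (rule ci(1))
      show "M (2*n) \<ge> 0" using ci(1,2) by simp
      show "0 \<le> P s" by fact
      show "P s \<le> T / 4" by fact
      show "\<bar>P' s\<bar> \<le> 1" by fact
      show "inner (u s) (f (u s)) - F (u s) \<le> 0" using NL2 uVs by blast
      show "\<bar>inner (blinfun_apply (B1s s) (u' s)) (blinfun_apply (B1s s) (u s))\<bar>
            \<le> norm (blinfun_apply (B1s s) (u' s)) * norm (blinfun_apply (B1s s) (u s))"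
        by (rule Cauchy_Schwarz_ineq2)
      show "\<bar>inner (u' s) (u s)\<bar> \<le> norm (u' s) * norm (u s)" by (rule Cauchy_Schwarz_ineq2)
      show "m (2*n) * (norm (u' s))\<^sup>2 \<le> (norm (blinfun_apply (B1s s) (u' s)))\<^sup>2" by (rule ci(3))
      show "(norm (blinfun_apply (B1s s) (u s)))\<^sup>2 \<le> M (2*n) * (norm (u s))\<^sup>2" by (rule ci(4))
      show "lam1 * (norm (u s))\<^sup>2 \<le> (norm (S (u s)))\<^sup>2" using poincare uVs by blast
    qed auto
    have eqL: "(P s)\<^sup>2 * E s + Q s = (P s)\<^sup>2 * (1/2 * ((norm (S (u s)))\<^sup>2 + (norm (u' s))\<^sup>2) - F (u s))
        + ((P s)\<^sup>2 * (inner (u s) (f (u s)) - inner (blinfun_apply (B1s s) (u' s)) (blinfun_apply (B1s s) (u s))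
              - (norm (S (u s)))\<^sup>2 + (norm (u' s))\<^sup>2) + 2 * P s * P' s * inner (u' s) (u s))"
      unfolding Q_def Vd_def \<phi>_def E_def energy_S_def even_D(2)[OF s2] by (simp add: power2_norm_eq_inner)
    have eqR: "D s = (norm (blinfun_apply (B1s s) (u' s)))\<^sup>2" unfolding D_def using even_D(1)[OF s2] .
    show "(P s)\<^sup>2 * E s + Q s \<le> K * D s" unfolding eqL eqR K_def using core .
  qed
  have "T'^3/30 * E b' \<le> K * (E ?a - E b')" using L1 L2 by simp
  then show ?thesis unfolding T'_def by (simp add: algebra_simps)
qed

end



context prob begin

lemma even_obs:
  fixes n :: nat
  defines "T \<equiv> tt (2*n+1) - tt (2*n)"
  defines "K \<equiv> 4 / (lam1 * m (2*n)) + 3 * T\<^sup>2 / (32 * m (2*n)) + M (2*n) * T\<^sup>2 / (16 * lam1)"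
  shows "E (tt (2*n+1)) \<le> 1 / (1 + T^3 / 30 * (1 / K)) * E (tt (2*n))"
proof -
  let ?a = "tt (2*n)" and ?b = "tt (2*n+1)"
  have ab: "?a < ?b" using tt_lt[of "2*n"] by simp
  have a0: "0 \<le> ?a" using tt_ge0 .
  have m0: "0 < m (2*n)" "m (2*n) \<le> M (2*n)" using cond_i by blast+
  have T0: "T > 0" unfolding T_def using ab by simp
  have K0: "K > 0" unfolding K_def using m0 lam_pos T0
    by (intro add_pos_nonneg add_pos_pos) (auto intro!: divide_nonneg_pos mult_nonneg_nonneg)
  have cg: "continuous_on {?a..?b} (\<lambda>y. E y * ((y - ?a)^3 / 30 + K))"
    using continuous_on_subset[OF E_cont] a0 by (intro continuous_intros) auto
  have "E ?b * ((?b - ?a)^3 / 30 + K) \<le> K * E ?a"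
  proof (rule le_at_end[OF cg ab])
    fix y assume y: "y \<in> {?a..<?b}"
    show "E y * ((y - ?a)^3 / 30 + K) \<le> K * E ?a"
    proof (cases "y = ?a")
      case True then show ?thesis by simp
    next
      case False
      then have "?a < y" "y < ?b" using y by auto
      then show ?thesis using even_obs_lt[of n y] unfolding K_def T_def by simp
    qed
  qed
  then have H: "E ?b * (T^3 / 30 + K) \<le> K * E ?a" unfolding T_def .
  have "T^3 / 30 > 0" using T0 by simp
  then have pos: "T^3 / 30 + K > 0" using K0 by (rule add_pos_pos)
  have "E ?b \<le> K * E ?a / (T^3 / 30 + K)" using H pos by (simp add: pos_le_divide_eq)
  also have "K * E ?a / (T^3 / 30 + K) = 1 / (1 + T^3 / 30 * (1 / K)) * E ?a"
    using K0 pos by (simp add: field_simps)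
  finally show ?thesis .
qed

lemma odd_k:
  shows "continuous_on {tt (2*n+1)..<tt (2*n+2)} k"
    and "\<And>s. s \<in> {tt (2*n+1)..<tt (2*n+2)} \<Longrightarrow>
           k s = f (u s) - blinfun_apply (B2 s) (blinfun_apply (B2s s) (u' (s - \<tau>)))"
proof -
  let ?c = "tt (2*n+1)" and ?d = "tt (2*n+2)"
  obtain g g' where gd: "\<forall>s\<in>{?c..?d}. (g has_vector_derivative g' s) (at s within {?c..?d})"
    and geq: "\<forall>s\<in>{?c..<?d}. g s = B2 s"
    using B2_C1 by blast
  have gc: "continuous_on {?c..?d} g"
    unfolding continuous_on_eq_continuous_within using gd has_vector_derivative_continuous by blast
  have ss: "{?c..<?d} \<subseteq> {?c..?d}" by (intro subsetI) simp
  have gc': "continuous_on {?c..<?d} g" using continuous_on_subset[OF gc ss] .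
  have Bc: "continuous_on {?c..<?d} B2s" using adj_cont[OF B2_adj gc' geq] .
  have c0: "0 \<le> ?c" using tt_ge0 .
  have sub: "{?c..<?d} \<subseteq> {0..}" using c0 by auto
  have fu: "continuous_on {?c..<?d} (\<lambda>s. f (u s))"
  proof (rule f_cont[OF lin f_loclip])
    show "u s \<in> V" if "s \<in> {?c..<?d}" for s using uV0 sub that by auto
    show "continuous_on {?c..<?d} (\<lambda>s. S (u s))" by (rule continuous_on_subset[OF cSu0 sub])
  qed
  have tl: "\<tau> \<le> tt (Suc (2*n)) - tt (2*n)" using tau_le by blast
  have a0: "0 \<le> tt (2*n)" using tt_ge0 .
  have im: "(\<lambda>s. s - \<tau>) ` {?c..<?d} \<subseteq> {0..}" using tl a0 by auto
  have cvd: "continuous_on {?c..<?d} (\<lambda>s. u' (s - \<tau>))"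
  proof -
    have "continuous_on {?c..<?d} (\<lambda>s. s - \<tau>)" by (intro continuous_intros)
    then show ?thesis using continuous_on_compose2[OF cv0 _ im] by blast
  qed
  have c1: "continuous_on {?c..<?d} (\<lambda>s. f (u s) - blinfun_apply (g s) (blinfun_apply (B2s s) (u' (s - \<tau>))))"
    by (intro continuous_intros fu gc' Bc cvd)
  show keq: "k s = f (u s) - blinfun_apply (B2 s) (blinfun_apply (B2s s) (u' (s - \<tau>)))"
    if s: "s \<in> {?c..<?d}" for s
  proof -
    have "B1 s = 0" using B1_off s by blast
    then show ?thesis unfolding k_def by simp
  qed
  show "continuous_on {?c..<?d} k"
    by (rule continuous_on_eq[OF c1]) (use keq geq in auto)
qed

lemma odd_bound:
  assumes s: "s \<in> {tt (2*n+1)..<tt (2*n+2)}"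
  shows "- inner (f (u s) - k s) (u' s) \<le> M (2*n+1) * (E (s - \<tau>) + E s)"
proof -
  let ?Mo = "M (2*n+1)"
  define x where "x = u' (s - \<tau>)"
  define y where "y = u' s"
  have Mo: "0 < ?Mo" using cond_ii by blast
  have bx: "(norm (blinfun_apply (B2s s) x))\<^sup>2 \<le> ?Mo * (norm x)\<^sup>2"
   and by': "(norm (blinfun_apply (B2s s) y))\<^sup>2 \<le> ?Mo * (norm y)\<^sup>2" using cond_ii s by blast+
  have tl: "\<tau> \<le> tt (Suc (2*n)) - tt (2*n)" using tau_le by blast
  have st0: "s - \<tau> \<ge> 0" using tl s tt_ge0[of "2*n"] by auto
  have s0: "s \<ge> 0" using st0 tau_pos by simp
  have eqD: "inner (f (u s) - k s) (u' s) = inner (blinfun_apply (B2s s) x) (blinfun_apply (B2s s) y)"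
    using odd_k(2)[OF s] B2_adj unfolding x_def y_def by simp
  have "\<bar>inner (blinfun_apply (B2s s) x) (blinfun_apply (B2s s) y)\<bar>
        \<le> norm (blinfun_apply (B2s s) x) * norm (blinfun_apply (B2s s) y)" by (rule Cauchy_Schwarz_ineq2)
  also have "\<dots> \<le> ?Mo * (norm x * norm y)"
  proof (rule power2_le_imp_le)
    have "(norm (blinfun_apply (B2s s) x) * norm (blinfun_apply (B2s s) y))\<^sup>2
        = (norm (blinfun_apply (B2s s) x))\<^sup>2 * (norm (blinfun_apply (B2s s) y))\<^sup>2" by (simp add: power_mult_distrib)
    also have "\<dots> \<le> (?Mo * (norm x)\<^sup>2) * (?Mo * (norm y)\<^sup>2)" using bx by' Mo by (intro mult_mono) auto
    also have "\<dots> = (?Mo * (norm x * norm y))\<^sup>2" by (simp add: power_mult_distrib power2_eq_square)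
    finally show "(norm (blinfun_apply (B2s s) x) * norm (blinfun_apply (B2s s) y))\<^sup>2 \<le> (?Mo * (norm x * norm y))\<^sup>2" .
    show "0 \<le> ?Mo * (norm x * norm y)" using Mo by simp
  qed
  also have "\<dots> \<le> ?Mo * ((norm x)\<^sup>2 / 2 + (norm y)\<^sup>2 / 2)"
  proof -
    have "norm x * norm y \<le> (norm x)\<^sup>2 / 2 + (norm y)\<^sup>2 / 2"
    proof -
      have "0 \<le> (norm x - norm y)\<^sup>2" by simp
      moreover have "(norm x - norm y)\<^sup>2 = (norm x)\<^sup>2 - 2 * (norm x * norm y) + (norm y)\<^sup>2"
        by (simp add: power2_eq_square algebra_simps)
      ultimately show ?thesis by linarith
    qed
    then show ?thesis using Mo by (intro mult_left_mono) auto
  qed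
  also have "\<dots> \<le> ?Mo * (E (s - \<tau>) + E s)"
  proof -
    have "(norm x)\<^sup>2 \<le> 2 * E (s - \<tau>)" using E_ge[OF st0] unfolding x_def by blast
    moreover have "(norm y)\<^sup>2 \<le> 2 * E s" using E_ge[OF s0] unfolding y_def by blast
    ultimately have "(norm x)\<^sup>2 / 2 + (norm y)\<^sup>2 / 2 \<le> E (s - \<tau>) + E s" by linarith
    then show ?thesis using Mo by (intro mult_left_mono) auto
  qed
  finally show ?thesis unfolding eqD by linarith
qed

end



context prob begin

lemma odd_strict:
  fixes n :: nat and \<epsilon> :: real
  assumes eps: "\<epsilon> > 0"
  defines "c \<equiv> tt (2*n+1)" and "d \<equiv> tt (2*n+2)" and "a \<equiv> tt (2*n)" and "Mo \<equiv> M (2*n+1)"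
  defines "\<beta> \<equiv> E c + Mo * (d - c) * E a"
  shows "\<forall>t\<in>{c..<d}. E t < (\<beta> + \<epsilon>) * exp (2 * Mo * (t - c))"
proof (rule ccontr)
  define w where "w = (\<lambda>t. (\<beta> + \<epsilon>) * exp (2 * Mo * (t - c)))"
  assume "\<not> (\<forall>t\<in>{c..<d}. E t < (\<beta> + \<epsilon>) * exp (2 * Mo * (t - c)))"
  then obtain t1 where t1: "t1 \<in> {c..<d}" "w t1 \<le> E t1" unfolding w_def by (auto simp: not_less)
  have c0: "0 \<le> c" unfolding c_def using tt_ge0 .
  have a0: "0 \<le> a" unfolding a_def using tt_ge0 .
  have ac: "a \<le> c" unfolding a_def c_def using tt_le[of "2*n" "2*n+1"] by simp
  have Mo: "0 < Mo" unfolding Mo_def using cond_ii by blast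
  have Ea: "0 \<le> E a" using E_ge[OF a0] by blast
  have Ec: "0 \<le> E c" using E_ge[OF c0] by blast
  have cd: "c < d" unfolding c_def d_def using tt_lt[of "2*n+1"] by simp
  have bge: "E c \<le> \<beta>" unfolding \<beta>_def using Mo Ea cd by simp
  have wpos: "0 < w t" for t unfolding w_def using bge Ec eps by simp
  have wmono: "w s \<le> w t" if "s \<le> t" for s t unfolding w_def using that Mo bge Ec eps by auto
  have wc: "w c = \<beta> + \<epsilon>" unfolding w_def by simp
  have cE: "continuous_on {c..t1} E" using continuous_on_subset[OF E_cont] c0 by auto
  have cw: "continuous_on {c..t1} w" unfolding w_def by (intro continuous_intros)
  define B where "B = {c..t1} \<inter> (\<lambda>t. E t - w t) -` {0..}"
  have clB: "closed B" unfolding B_def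
    by (rule continuous_closed_preimage[OF continuous_on_diff[OF cE cw]]) auto
  have t1B: "t1 \<in> B" unfolding B_def using t1 by auto
  have bB: "bdd_below B" unfolding B_def by (rule bdd_belowI[of _ c]) auto
  define ts where "ts = Inf B"
  have tsB: "ts \<in> B" unfolding ts_def using closed_contains_Inf[OF _ bB clB] t1B by auto
  have ts1: "c \<le> ts" "ts \<le> t1" "w ts \<le> E ts" using tsB unfolding B_def by auto
  have below: "E s < w s" if s: "s \<in> {c..<ts}" for s
  proof (rule ccontr)
    assume "\<not> E s < w s"
    then have "s \<in> B" unfolding B_def using s ts1 by auto
    then have "ts \<le> s" unfolding ts_def using cInf_lower[OF _ bB] by blast
    then show False using s by simp
  qed
  have cts: "c < ts"
  proof (rule ccontr)
    assume "\<not> c < ts"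
    then have "ts = c" using ts1 by simp
    then have "w c \<le> E c" using ts1 by simp
    then show False using wc bge eps by simp
  qed
  have Ets: "E ts - w ts \<le> 0"
  proof (rule le_at_end[OF _ cts])
    show "continuous_on {c..ts} (\<lambda>t. E t - w t)"
      using continuous_on_subset[OF continuous_on_diff[OF cE cw]] ts1 by auto
    show "E y - w y \<le> 0" if "y \<in> {c..<ts}" for y using below[OF that] by simp
  qed
  have le_all: "E s \<le> w s" if "s \<in> {c..ts}" for s
  proof (cases "s = ts")
    case True then show ?thesis using Ets by simp
  next
    case False then show ?thesis using below[of s] that by fastforce
  qed
  have tsd: "ts < d" using ts1 t1 by simp
  have ss: "{c..ts} \<subseteq> {tt (2*n+1)..<tt (2*n+2)}" using tsd unfolding c_def d_def by auto
  have ck: "continuous_on {c..ts} k" using continuous_on_subset[OF odd_k(1) ss] .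
  have HD: "((\<lambda>s. inner (f (u s) - k s) (u' s)) has_integral (E c - E ts)) {c..ts}"
    using energy_id[OF c0 _ ck] ts1 by simp
  have HDn: "((\<lambda>s. - inner (f (u s) - k s) (u' s)) has_integral (- (E c - E ts))) {c..ts}"
    using has_integral_neg[OF HD] .
  have Hc: "((\<lambda>s. Mo * E a) has_integral ((ts - c) * (Mo * E a))) {c..ts}"
    using has_integral_const_real[of "Mo * E a" c ts] ts1 by simp
  have Hw: "((\<lambda>s. 2 * Mo * w s) has_integral (w ts - w c)) {c..ts}"
  proof (rule fundamental_theorem_of_calculus)
    show "c \<le> ts" by fact
    fix s assume "s \<in> {c..ts}"
    have "(w has_real_derivative 2 * Mo * w s) (at s within {c..ts})"
      unfolding w_def by (auto intro!: derivative_eq_intros)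
    then show "(w has_vector_derivative 2 * Mo * w s) (at s within {c..ts})"
      using has_real_derivative_iff_has_vector_derivative by blast
  qed
  have HR: "((\<lambda>s. Mo * E a + 2 * Mo * w s) has_integral ((ts - c) * (Mo * E a) + (w ts - w c))) {c..ts}"
    using has_integral_add[OF Hc Hw] .
  have pw: "- inner (f (u s) - k s) (u' s) \<le> Mo * E a + 2 * Mo * w s" if s: "s \<in> {c..ts}" for s
  proof -
    have s2: "s \<in> {tt (2*n+1)..<tt (2*n+2)}" using ss s by auto
    have b1: "- inner (f (u s) - k s) (u' s) \<le> Mo * (E (s - \<tau>) + E s)"
      using odd_bound[OF s2] unfolding Mo_def .
    have tl: "\<tau> \<le> c - a" using tau_le unfolding c_def a_def by simp
    have e1: "E s \<le> w s" using le_all[OF s] .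
    have e2: "E (s - \<tau>) \<le> E a + w s"
    proof (cases "s - \<tau> \<le> c")
      case True
      have "a \<le> s - \<tau>" using tl s by auto
      then have "E (s - \<tau>) \<le> E a" using even_mono[of n a "s - \<tau>"] True unfolding a_def c_def by simp
      then show ?thesis using wpos[of s] by simp
    next
      case False
      then have "s - \<tau> \<in> {c..ts}" using s tau_pos by auto
      then have "E (s - \<tau>) \<le> w (s - \<tau>)" using le_all by blast
      also have "\<dots> \<le> w s" using wmono tau_pos by simp
      finally show ?thesis using Ea by simp
    qed
    have "Mo * (E (s - \<tau>) + E s) \<le> Mo * (E a + w s + w s)" using e1 e2 Mo by (intro mult_left_mono) auto
    then show ?thesis using b1 by (simp add: algebra_simps)
  qed
  have I: "- (E c - E ts) \<le> (ts - c) * (Mo * E a) + (w ts - w c)"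
    using has_integral_le[OF HDn HR pw] .
  have "(ts - c) * (Mo * E a) \<le> (d - c) * (Mo * E a)"
    using tsd Mo Ea by (intro mult_right_mono) auto
  then have "E ts \<le> w ts - \<epsilon>" using I wc unfolding \<beta>_def by (simp add: algebra_simps)
  then show False using ts1 eps by simp
qed

lemma odd_gron:
  fixes n :: nat
  assumes t: "t \<in> {tt (2*n+1)..tt (2*n+2)}"
  shows "E t \<le> exp (2 * M (2*n+1) * (tt (2*n+2) - tt (2*n+1)))
               * (E (tt (2*n+1)) + M (2*n+1) * (tt (2*n+2) - tt (2*n+1)) * E (tt (2*n)))"
proof -
  let ?c = "tt (2*n+1)" and ?d = "tt (2*n+2)" and ?a = "tt (2*n)" and ?Mo = "M (2*n+1)"
  define \<beta> where "\<beta> = E ?c + ?Mo * (?d - ?c) * E ?a"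
  have Mo: "0 < ?Mo" using cond_ii by blast
  have a0: "0 \<le> ?a" using tt_ge0 .
  have c0: "0 \<le> ?c" using tt_ge0 .
  have cd: "?c < ?d" using tt_lt[of "2*n+1"] by simp
  have b0: "0 \<le> \<beta>" unfolding \<beta>_def using E_ge[OF a0] E_ge[OF c0] Mo cd by simp
  have lt: "E s \<le> exp (2 * ?Mo * (?d - ?c)) * \<beta>" if s: "s \<in> {?c..<?d}" for s
  proof -
    define X where "X = exp (2 * ?Mo * (s - ?c))"
    have X: "X > 0" unfolding X_def by simp
    have "E s \<le> \<beta> * X"
    proof (rule ccontr)
      assume "\<not> E s \<le> \<beta> * X"
      then have gt: "E s > \<beta> * X" by simp
      define \<epsilon> where "\<epsilon> = (E s - \<beta> * X) / X"
      have eps: "\<epsilon> > 0" unfolding \<epsilon>_def using gt X by simp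
      have "E s < (\<beta> + \<epsilon>) * X" using odd_strict[OF eps, of n] s unfolding \<beta>_def X_def by auto
      also have "(\<beta> + \<epsilon>) * X = E s" unfolding \<epsilon>_def using X by (simp add: field_simps)
      finally show False by simp
    qed
    also have "\<beta> * X \<le> \<beta> * exp (2 * ?Mo * (?d - ?c))" unfolding X_def using b0 Mo s
      by (intro mult_left_mono) auto
    finally show ?thesis by (simp add: mult.commute)
  qed
  show ?thesis
  proof (cases "t < ?d")
    case True then show ?thesis using lt t unfolding \<beta>_def by auto
  next
    case False
    then have td: "t = ?d" using t by simp
    have "continuous_on {?c..?d} E" using continuous_on_subset[OF E_cont] c0 by auto
    then have "E ?d \<le> exp (2 * ?Mo * (?d - ?c)) * \<beta>" by (rule le_at_end[OF _ cd]) (rule lt)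
    then show ?thesis using td unfolding \<beta>_def by simp
  qed
qed

end



context prob begin

lemma main_decay:
  fixes ct :: "nat \<Rightarrow> real"
  assumes ct_def: "\<And>n. ct n = 1 / (1 + (tt (Suc (2*n)) - tt (2*n))^3 / 30 *
              (1 / (4 / (lam1 * m (2*n)) + 3 * (tt (Suc (2*n)) - tt (2*n))\<^sup>2 / (32 * m (2*n))
                    + M (2*n) * (tt (Suc (2*n)) - tt (2*n))\<^sup>2 / (16 * lam1))))
            + M (2*n+1) * (tt (Suc (2*n+1)) - tt (2*n+1))"
    and sdiv: "filterlim (\<lambda>N. \<Sum>n<N. 2 * M (2*n+1) * (tt (Suc (2*n+1)) - tt (2*n+1)) + ln (ct n)) at_bot sequentially"
  shows "(E \<longlongrightarrow> 0) at_top"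
proof -
  define x where "x = (\<lambda>n. M (2*n+1) * (tt (Suc (2*n+1)) - tt (2*n+1)))"
  define cn where "cn = (\<lambda>n. 1 / (1 + (tt (Suc (2*n)) - tt (2*n))^3 / 30 *
              (1 / (4 / (lam1 * m (2*n)) + 3 * (tt (Suc (2*n)) - tt (2*n))\<^sup>2 / (32 * m (2*n))
                    + M (2*n) * (tt (Suc (2*n)) - tt (2*n))\<^sup>2 / (16 * lam1)))))"
  define Sg where "Sg = (\<lambda>N. \<Sum>n<N. 2 * M (2*n+1) * (tt (Suc (2*n+1)) - tt (2*n+1)) + ln (ct n))"
  have ctx: "ct n = cn n + x n" for n unfolding cn_def x_def ct_def ..
  have x0: "x n > 0" for n
  proof -
    have "0 < M (2*n+1)" using cond_ii by blast
    moreover have "tt (2*n+1) < tt (Suc (2*n+1))" using tt_lt .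
    ultimately show ?thesis unfolding x_def by simp
  qed
  have cn0: "cn n \<ge> 0" for n
  proof -
    have T0: "tt (Suc (2*n)) - tt (2*n) > 0" using tt_lt[of "2*n"] by simp
    have m0: "0 < m (2*n)" "m (2*n) \<le> M (2*n)" using cond_i by blast+
    have K0: "0 < 4 / (lam1 * m (2*n)) + 3 * (tt (Suc (2*n)) - tt (2*n))\<^sup>2 / (32 * m (2*n))
                    + M (2*n) * (tt (Suc (2*n)) - tt (2*n))\<^sup>2 / (16 * lam1)"
      using m0 lam_pos T0 by (intro add_pos_nonneg add_pos_pos) (auto intro!: divide_nonneg_pos mult_nonneg_nonneg)
    have "0 \<le> (tt (Suc (2*n)) - tt (2*n))^3 / 30" using T0 by simp
    then have "0 \<le> (tt (Suc (2*n)) - tt (2*n))^3 / 30 * (1 / (4 / (lam1 * m (2*n)) + 3 * (tt (Suc (2*n)) - tt (2*n))\<^sup>2 / (32 * m (2*n))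
                    + M (2*n) * (tt (Suc (2*n)) - tt (2*n))\<^sup>2 / (16 * lam1)))" using K0 by simp
    then show ?thesis unfolding cn_def by simp
  qed
  have ct0: "ct n > 0" for n using ctx cn0 x0 by (simp add: add_nonneg_pos)
  have E0: "E t \<ge> 0" if "t \<ge> 0" for t using E_ge[OF that] by blast
  have Ec: "E (tt (2*n+1)) \<le> cn n * E (tt (2*n))" for n
    using even_obs[of n] unfolding cn_def by simp
  have Ed: "E t \<le> exp (2 * x n) * (E (tt (2*n+1)) + x n * E (tt (2*n)))"
    if "t \<in> {tt (2*n+1)..tt (2*n+2)}" for n t
    using odd_gron[OF that] unfolding x_def by (simp add: algebra_simps)
  have step: "E (tt (2 * Suc n)) \<le> exp (2 * x n + ln (ct n)) * E (tt (2*n))" for n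
  proof -
    have d: "tt (2 * Suc n) = tt (2*n+2)" by simp
    have dd: "tt (2*n+2) \<in> {tt (2*n+1)..tt (2*n+2)}" using tt_lt[of "2*n+1"] by simp
    have "E (tt (2*n+2)) \<le> exp (2 * x n) * (E (tt (2*n+1)) + x n * E (tt (2*n)))" using Ed[OF dd] .
    also have "\<dots> \<le> exp (2 * x n) * (cn n * E (tt (2*n)) + x n * E (tt (2*n)))"
      using Ec by (intro mult_left_mono add_right_mono) auto
    also have "\<dots> = exp (2 * x n + ln (ct n)) * E (tt (2*n))"
      using ct0[of n] by (simp add: exp_add ctx algebra_simps)
    finally show ?thesis using d by simp
  qed
  have Sg_Suc: "Sg (Suc N) = Sg N + (2 * x N + ln (ct N))" for N
    unfolding Sg_def x_def by simp
  have ind: "E (tt (2*N)) \<le> exp (Sg N) * E (tt 0)" for N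
  proof (induction N)
    case 0 then show ?case unfolding Sg_def by simp
  next
    case (Suc N)
    have "E (tt (2 * Suc N)) \<le> exp (2 * x N + ln (ct N)) * E (tt (2*N))" using step .
    also have "\<dots> \<le> exp (2 * x N + ln (ct N)) * (exp (Sg N) * E (tt 0))"
      using Suc by (intro mult_left_mono) auto
    also have "\<dots> = exp (Sg (Suc N)) * E (tt 0)" unfolding Sg_Suc by (simp add: exp_add)
    finally show ?case .
  qed
  define A where "A = (\<lambda>N. 2 * exp 2 * (exp (Sg N) + exp (Sg (Suc N))) * E (tt 0))"
  have E00: "E (tt 0) \<ge> 0" using E0 tt_ge0 by blast
  have bnd: "E t \<le> A N" if t: "tt (2*N) \<le> t" "t \<le> tt (2*N+2)" for N t
  proof -
    have eN: "E (tt (2*N)) \<le> exp (Sg N) * E (tt 0)" using ind .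
    have eS: "0 \<le> exp (Sg (Suc N)) * E (tt 0)" using E00 by simp
    have eN0: "0 \<le> exp (Sg N) * E (tt 0)" using E00 by simp
    have "1 \<le> exp (2::real)" by simp
    then have e2: "1 \<le> 2 * exp (2::real)" by linarith
    have lhs: "E t \<le> 2 * exp 2 * (exp (Sg N) * E (tt 0)) + 2 * exp 2 * (exp (Sg (Suc N)) * E (tt 0))"
    proof (cases "t \<le> tt (2*N+1)")
      case True
      then have "E t \<le> E (tt (2*N))" using even_mono[of N "tt (2*N)" t] t by simp
      also have "\<dots> \<le> exp (Sg N) * E (tt 0)" by (rule eN)
      also have "\<dots> \<le> 2 * exp 2 * (exp (Sg N) * E (tt 0))" using mult_right_mono[OF e2 eN0] by simp
      finally show ?thesis using eS by (simp add: add_increasing2)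
    next
      case False
      then have tin: "t \<in> {tt (2*N+1)..tt (2*N+2)}" using t by simp
      have Ecle: "E (tt (2*N+1)) \<le> E (tt (2*N))" using even_mono[of N "tt (2*N)" "tt (2*N+1)"] tt_lt[of "2*N"] by simp
      have Ea0: "0 \<le> E (tt (2*N))" using E0 tt_ge0 by blast
      have "E t \<le> exp (2 * x N) * (E (tt (2*N+1)) + x N * E (tt (2*N)))" using Ed[OF tin] .
      also have "\<dots> \<le> exp (2 * x N) * ((1 + x N) * E (tt (2*N)))"
        using Ecle by (intro mult_left_mono) (auto simp: algebra_simps)
      finally have Et: "E t \<le> exp (2 * x N) * (1 + x N) * E (tt (2*N))" by (simp add: mult.assoc)
      show ?thesis
      proof (cases "x N \<le> 1")
        case True
        have "exp (2 * x N) * (1 + x N) \<le> exp 2 * 2"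
          using True x0[of N] by (intro mult_mono) auto
        then have "E t \<le> (exp 2 * 2) * E (tt (2*N))" using Et Ea0 by (meson mult_right_mono order_trans)
        also have "\<dots> \<le> (exp 2 * 2) * (exp (Sg N) * E (tt 0))" using eN by (intro mult_left_mono) auto
        finally show ?thesis using eS by (simp add: algebra_simps add_increasing2)
      next
        case False
        have "exp (2 * x N) * (1 + x N) \<le> exp (2 * x N) * (2 * ct N)"
          using False ctx[of N] cn0[of N] by (intro mult_left_mono) auto
        also have "\<dots> = 2 * exp (2 * x N + ln (ct N))" using ct0[of N] by (simp add: exp_add)
        finally have "E t \<le> 2 * exp (2 * x N + ln (ct N)) * E (tt (2*N))" using Et Ea0 by (meson mult_right_mono order_trans)
        also have "\<dots> \<le> 2 * exp (2 * x N + ln (ct N)) * (exp (Sg N) * E (tt 0))" using eN by (intro mult_left_mono) auto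
        also have "\<dots> = 2 * (exp (Sg (Suc N)) * E (tt 0))" unfolding Sg_Suc by (simp add: exp_add)
        also have "\<dots> \<le> 2 * exp 2 * (exp (Sg (Suc N)) * E (tt 0))"
          using eS by (intro mult_right_mono) auto
        finally show ?thesis using eN0 e2 by (simp add: add_increasing)
      qed
    qed
    then show ?thesis unfolding A_def by (simp add: algebra_simps)
  qed
  have expS: "(\<lambda>N. exp (Sg N)) \<longlonglongrightarrow> 0"
    using filterlim_compose[OF exp_at_bot sdiv[folded Sg_def]] by (simp add: o_def)
  have A0: "A \<longlonglongrightarrow> 0"
  proof -
    have "(\<lambda>N. exp (Sg (Suc N))) \<longlonglongrightarrow> 0" using LIMSEQ_Suc[OF expS] .
    then have "A \<longlonglongrightarrow> 2 * exp 2 * (0 + 0) * E (tt 0)" unfolding A_def by (intro tendsto_intros expS)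
    then show ?thesis by simp
  qed
  show ?thesis
    unfolding tendsto_iff
  proof (intro allI impI)
    fix e :: real assume e: "e > 0"
    obtain N0 where N0: "\<forall>N\<ge>N0. A N < e"
      using A0 e unfolding tendsto_iff eventually_sequentially dist_real_def
      by (metis abs_less_iff diff_0_right)
    show "\<forall>\<^sub>F t in at_top. dist (E t) 0 < e"
      unfolding eventually_at_top_linorder
    proof (intro exI[of _ "tt (2*N0)"] allI impI)
      fix t assume t: "t \<ge> tt (2*N0)"
      have t0: "t \<ge> 0" using t tt_ge0[of "2*N0"] by simp
      have ex: "\<exists>j. t < tt j"
      proof -
        have "eventually (\<lambda>j. tt j > t) sequentially" using tt_lim by (simp add: filterlim_at_top_dense)
        then show ?thesis by (simp add: eventually_sequentially) (meson order_refl)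
      qed
      define j0 where "j0 = (LEAST j. t < tt j)"
      have j0: "t < tt j0" unfolding j0_def using LeastI_ex[OF ex] .
      have j0pos: "j0 > 0"
      proof (rule ccontr)
        assume "\<not> j0 > 0"
        then have "j0 = 0" by simp
        then show False using j0 t0 tt0 by simp
      qed
      have jm: "tt (j0 - 1) \<le> t"
      proof (rule ccontr)
        assume "\<not> tt (j0 - 1) \<le> t"
        then have "t < tt (j0 - 1)" by simp
        then have "j0 \<le> j0 - 1" unfolding j0_def by (rule Least_le)
        then show False using j0pos by simp
      qed
      define N where "N = (j0 - 1) div 2"
      have N1: "2 * N \<le> j0 - 1" "j0 \<le> 2 * N + 2" unfolding N_def using j0pos by auto
      have tN: "tt (2*N) \<le> t" using tt_le[OF N1(1)] jm by simp
      have tN2: "t \<le> tt (2*N+2)" using tt_le[OF N1(2)] j0 by simp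
      have "2 * N0 < j0"
      proof (rule ccontr)
        assume "\<not> 2 * N0 < j0"
        then have "tt j0 \<le> tt (2*N0)" using tt_le by simp
        then show False using j0 t by simp
      qed
      then have NN0: "N \<ge> N0" unfolding N_def by auto
      have "E t \<le> A N" using bnd[OF tN tN2] .
      also have "\<dots> < e" using N0 NN0 by blast
      finally show "dist (E t) 0 < e" using E0[OF t0] by simp
    qed
  qed
qed

end


theorem theorem3p2:
  fixes DA V :: "'h::{real_inner,complete_space} set"
    and A S :: "'h \<Rightarrow> 'h"
    and B1 B1s :: "real \<Rightarrow> 'h \<Rightarrow>\<^sub>L 'h"
    and B2 :: "real \<Rightarrow> 'u::{real_inner,complete_space} \<Rightarrow>\<^sub>L 'h"
    and B2s :: "real \<Rightarrow> 'h \<Rightarrow>\<^sub>L 'u"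
    and tt m M :: "nat \<Rightarrow> real"
    and \<tau> lam1 :: real
    and f :: "'h \<Rightarrow> 'h" and F :: "'h \<Rightarrow> real"
    and u0 u1 :: 'h and u u' :: "real \<Rightarrow> 'h"
  defines "T \<equiv> (\<lambda>n. tt (Suc n) - tt n)"
  defines "ctil \<equiv> (\<lambda>n. 1 / (1 + (T (2*n))^3 / 30 *
              (1 / (4 / (lam1 * m (2*n)) + 3 * (T (2*n))\<^sup>2 / (32 * m (2*n))
                    + M (2*n) * (T (2*n))\<^sup>2 / (16 * lam1))))
            + M (2*n+1) * T (2*n+1))"
  assumes A_sa: "self_adjoint_op DA A" and A_pos: "positive_op DA A"
    and A_coer: "coercive_op DA A"
    and S_sqrt: "is_sqrt_op DA A V S"
    and lam_pos: "lam1 > 0"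
    and poincare: "\<forall>v\<in>V. lam1 * (norm v)\<^sup>2 \<le> (norm (S v))\<^sup>2"
    and B1_adj: "\<forall>t x y. inner (blinfun_apply (B1 t) x) y = inner x (blinfun_apply (B1s t) y)"
    and B2_adj: "\<forall>t x y. inner (blinfun_apply (B2 t) x) y = inner x (blinfun_apply (B2s t) y)"
    and tt0: "tt 0 = 0" and tt_mono: "strict_mono tt"
    and tt_lim: "filterlim tt at_top sequentially"
    and B2_off: "\<forall>n. \<forall>t\<in>{tt (2*n)..<tt (2*n+1)}. B2 t = 0"
    and B1_off: "\<forall>n. \<forall>t\<in>{tt (2*n+1)..<tt (2*n+2)}. B1 t = 0"
    and B1_C1: "\<forall>n. \<exists>g g'.
        (\<forall>s\<in>{tt (2*n)..tt (2*n+1)}. (g has_vector_derivative g' s) (at s within {tt (2*n)..tt (2*n+1)}))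
        \<and> continuous_on {tt (2*n)..tt (2*n+1)} g'
        \<and> (\<forall>s\<in>{tt (2*n)..<tt (2*n+1)}. g s = B1 s)"
    and B2_C1: "\<forall>n. \<exists>g g'.
        (\<forall>s\<in>{tt (2*n+1)..tt (2*n+2)}. (g has_vector_derivative g' s) (at s within {tt (2*n+1)..tt (2*n+2)}))
        \<and> continuous_on {tt (2*n+1)..tt (2*n+2)} g'
        \<and> (\<forall>s\<in>{tt (2*n+1)..<tt (2*n+2)}. g s = B2 s)"
    and cond_i: "\<forall>n. 0 < m (2*n) \<and> m (2*n) \<le> M (2*n) \<and>
        (\<forall>t\<in>{tt (2*n)..<tt (2*n+1)}. \<forall>x.
           m (2*n) * (norm x)\<^sup>2 \<le> (norm (blinfun_apply (B1s t) x))\<^sup>2 \<and>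
           (norm (blinfun_apply (B1s t) x))\<^sup>2 \<le> M (2*n) * (norm x)\<^sup>2)"
    and cond_ii: "\<forall>n. 0 < M (2*n+1) \<and>
        (\<forall>t\<in>{tt (2*n+1)..<tt (2*n+2)}. \<forall>x.
           (norm (blinfun_apply (B2s t) x))\<^sup>2 \<le> M (2*n+1) * (norm x)\<^sup>2)"
    and tau_pos: "\<tau> > 0" and tau_le: "\<forall>n. \<tau> \<le> T (2*n)"
    and f_loclip: "\<forall>K>0. \<exists>L. \<forall>x\<in>V. \<forall>y\<in>V. norm (S x) \<le> K \<longrightarrow> norm (S y) \<le> K \<longrightarrow>
                     norm (f x - f y) \<le> L * norm (S (x - y))"
    and F0: "F 0 = 0"
    and F_deriv: "\<forall>x\<in>V. \<forall>v\<in>V. ((\<lambda>s. F (x + s *\<^sub>R v)) has_real_derivative inner (f x) v) (at 0)"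
    and NL1: "\<forall>x\<in>V. inner x (f x) \<le> 0"
    and NL2: "\<forall>x\<in>V. inner x (f x) - F x \<le> 0"
    and sum_div: "filterlim (\<lambda>N. \<Sum>n<N. 2 * M (2*n+1) * T (2*n+1) + ln (ctil n)) at_bot sequentially"
    and u0V: "u0 \<in> V"
    and sol: "delayed_wave_solution V S B1 B1s B2 B2s \<tau> f u0 u1 u u'"
  shows "(energy_S S F u u' \<longlongrightarrow> 0) at_top"
proof -
  have lin: "lin_op_on V S" using S_sqrt unfolding is_sqrt_op_def self_adjoint_op_def by blast
  have tl: "\<forall>n. \<tau> \<le> tt (Suc (2*n)) - tt (2*n)" using tau_le unfolding T_def .
  interpret P: prob V S B1 B1s B2 B2s tt m M \<tau> lam1 f F u0 u1 u u'
    using lin lam_pos poincare B1_adj B2_adj tt0 tt_mono tt_lim B2_off B1_off B1_C1 B2_C1 cond_i cond_ii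
      tau_pos tl f_loclip F0 F_deriv NL1 NL2 sol by (rule prob.intro)
  have ct: "\<And>n. ctil n = 1 / (1 + (tt (Suc (2*n)) - tt (2*n))^3 / 30 *
              (1 / (4 / (lam1 * m (2*n)) + 3 * (tt (Suc (2*n)) - tt (2*n))\<^sup>2 / (32 * m (2*n))
                    + M (2*n) * (tt (Suc (2*n)) - tt (2*n))\<^sup>2 / (16 * lam1))))
            + M (2*n+1) * (tt (Suc (2*n+1)) - tt (2*n+1))"
    unfolding ctil_def T_def by simp
  have sdiv: "filterlim (\<lambda>N. \<Sum>n<N. 2 * M (2*n+1) * (tt (Suc (2*n+1)) - tt (2*n+1)) + ln (ctil n)) at_bot sequentially"
    using sum_div unfolding T_def .
  show ?thesis using P.main_decay[OF ct sdiv] unfolding P.E_def .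
qed

end
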